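(* Let $H_0,H_1$ be complex Hilbert spaces, $G$ a densely defined closed operator from $H_0$ into $H_1$ and $D$ a densely defined closed operator from $H_1$ into $H_0$ with $-G^*\subset D$. Let $H$ be a Hilbert space and $\kappa\in\mathcal{L}(\mathrm{BD}(G),H)$ injective with dense range. Let $a\in\mathcal{L}(H_1)$ and $m\in\mathcal{L}(H_0)$ be coercive. Then the Dirichlet-to-Neumann operator $\Lambda_H$ in $H$ associated with $-DaG+m$ is m-sectorial. In particular, if both $a$ and $m$ are self-adjoint, then $\Lambda_H$ is self-adjoint.
   Context: Put $\mathring D=-G^*$ and $\mathring G=-D^*$. Domains carry graph inner products, e.g. $(u,v)_{\mathrm{dom}(G)}=(u,v)_{H_0}+(Gu,Gv)_{H_1}$. $\mathrm{BD}(G)$ is the orthogonal complement of $\mathrm{dom}(\mathring G)$ in $\mathrm{dom}(G)$, $\mathrm{BD}(D)$ the orthogonal complement of $\mathrm{dom}(\mathring D)$ in $\mathrm{dom}(D)$, with induced inner products; $\pi_{\mathrm{BD}(D)}$ is the orthogonal projection of $\mathrm{dom}(D)$ onto $\mathrm{BD}(D)$. $G$ maps $\mathrm{BD}(G)$ into $\mathrm{BD}(D)$. Coercive: $\mathrm{Re}(Mx,x)\ge\mu\|x\|^2$ for some $\mu>0$. For coercive $a,m$ and $u_0\in\mathrm{BD}(G)$ there is a unique $u\in\mathrm{dom}(G)$ with $aGu\in\mathrm{dom}(D)$, $mu-DaGu=0$, $u-u_0\in\mathrm{dom}(\mathring G)$; set $\Lambda u_0=\pi_{\mathrm{BD}(D)}(aGu)$.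 $\kappa^*\colon H\to\mathrm{BD}(G)$ denotes the Hilbert space adjoint of $\kappa$. The operator $\Lambda_H$ in $H$ is defined by: for $\varphi,\psi\in H$, $\varphi\in\mathrm{dom}(\Lambda_H)$ and $\Lambda_H\varphi=\psi$ iff there exists $u_0\in\mathrm{BD}(G)$ with $\kappa(u_0)=\varphi$ and $\Lambda u_0=G\kappa^*\psi$. *)

theory Defs
  imports "HOL-Analysis.Analysis"
begin

text \<open>The distribution has no complex inner product spaces, so we introduce them.
  The inner product is conjugate-linear in the first and linear in the second argument.\<close>

class complex_inner = real_normed_vector +
  fixes scaleC :: "complex \<Rightarrow> 'a \<Rightarrow> 'a" (infixr \<open>*\<^sub>C\<close> 75)
    and cinner :: "'a \<Rightarrow> 'a \<Rightarrow> complex"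
  assumes scaleC_add_right: "c *\<^sub>C (x + y) = c *\<^sub>C x + c *\<^sub>C y"
    and scaleC_add_left: "(b + c) *\<^sub>C x = b *\<^sub>C x + c *\<^sub>C x"
    and scaleC_scaleC: "b *\<^sub>C (c *\<^sub>C x) = (b * c) *\<^sub>C x"
    and scaleC_one: "1 *\<^sub>C x = x"
    and scaleR_scaleC: "scaleR r x = complex_of_real r *\<^sub>C x"
    and cinner_commute: "cinner x y = cnj (cinner y x)"
    and cinner_add_left: "cinner (x + y) z = cinner x z + cinner y z"
    and cinner_scaleC_left: "cinner (c *\<^sub>C x) y = cnj c * cinner x y"
    and norm_eq_sqrt_cinner: "norm x = sqrt (Re (cinner x x))"

class chilbert_space = complex_inner + complete_space

section \<open>(Unbounded) linear operators, represented by their graphs\<close>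

definition clinear_op :: "('a::complex_inner \<times> 'b::complex_inner) set \<Rightarrow> bool" where
  "clinear_op T \<longleftrightarrow> (0, 0) \<in> T
     \<and> (\<forall>x y x' y'. (x, y) \<in> T \<longrightarrow> (x', y') \<in> T \<longrightarrow> (x + x', y + y') \<in> T)
     \<and> (\<forall>c x y. (x, y) \<in> T \<longrightarrow> (c *\<^sub>C x, c *\<^sub>C y) \<in> T)
     \<and> (\<forall>y. (0, y) \<in> T \<longrightarrow> y = 0)"

definition opdom :: "('a \<times> 'b) set \<Rightarrow> 'a set" where
  "opdom T = fst ` T"

definition opapp :: "('a \<times> 'b) set \<Rightarrow> 'a \<Rightarrow> 'b" where
  "opapp T x = (THE y. (x, y) \<in> T)"

definition densely_defined :: "('a::complex_inner \<times> 'b) set \<Rightarrow> bool" where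
  "densely_defined T \<longleftrightarrow> closure (opdom T) = UNIV"

definition dd_closed_op :: "('a::complex_inner \<times> 'b::complex_inner) set \<Rightarrow> bool" where
  "dd_closed_op T \<longleftrightarrow> clinear_op T \<and> closed T \<and> densely_defined T"

definition adjoint :: "('a::complex_inner \<times> 'b::complex_inner) set \<Rightarrow> ('b \<times> 'a) set" where
  "adjoint T = {(y, z). \<forall>x w. (x, w) \<in> T \<longrightarrow> cinner w y = cinner x z}"

definition neg_op :: "('a \<times> 'b::uminus) set \<Rightarrow> ('a \<times> 'b) set" where
  "neg_op T = {(x, - y) | x y. (x, y) \<in> T}"

definition Dring :: "('a::complex_inner \<times> 'b::complex_inner) set \<Rightarrow> ('b \<times> 'a) set" where
  "Dring G = neg_op (adjoint G)"

definition Gring :: "('b::complex_inner \<times> 'a::complex_inner) set \<Rightarrow> ('a \<times> 'b) set" where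
  "Gring D = neg_op (adjoint D)"

definition gip :: "('a::complex_inner \<times> 'b::complex_inner) set \<Rightarrow> 'a \<Rightarrow> 'a \<Rightarrow> complex" where
  "gip T u v = cinner u v + cinner (opapp T u) (opapp T v)"

definition gnorm :: "('a::complex_inner \<times> 'b::complex_inner) set \<Rightarrow> 'a \<Rightarrow> real" where
  "gnorm T u = sqrt (Re (gip T u u))"

definition BD :: "('a::complex_inner \<times> 'b::complex_inner) set \<Rightarrow> ('a \<times> 'b) set \<Rightarrow> 'a set" where
  "BD T T0 = {u \<in> opdom T. \<forall>v \<in> opdom T0. gip T v u = 0}"

definition BDG :: "('a::complex_inner \<times> 'b::complex_inner) set \<Rightarrow> ('b \<times> 'a) set \<Rightarrow> 'a set" where
  "BDG G D = BD G (Gring D)"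

definition BDD :: "('a::complex_inner \<times> 'b::complex_inner) set \<Rightarrow> ('b \<times> 'a) set \<Rightarrow> 'b set" where
  "BDD G D = BD D (Dring G)"

definition projBD :: "('a::complex_inner \<times> 'b::complex_inner) set \<Rightarrow> ('a \<times> 'b) set \<Rightarrow> 'a \<Rightarrow> 'a" where
  "projBD T T0 w = (THE p. p \<in> BD T T0 \<and> (\<forall>q \<in> BD T T0. gip T (w - p) q = 0))"

definition clinear_on :: "'a::complex_inner set \<Rightarrow> ('a \<Rightarrow> 'b::complex_inner) \<Rightarrow> bool" where
  "clinear_on S f \<longleftrightarrow> (\<forall>x \<in> S. \<forall>y \<in> S. f (x + y) = f x + f y)
     \<and> (\<forall>c. \<forall>x \<in> S. f (c *\<^sub>C x) = c *\<^sub>C f x)"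

definition bounded_clinear_op :: "('a::complex_inner \<Rightarrow> 'b::complex_inner) \<Rightarrow> bool" where
  "bounded_clinear_op f \<longleftrightarrow> clinear_on UNIV f \<and> (\<exists>K. \<forall>x. norm (f x) \<le> norm x * K)"

definition coercive :: "('a::complex_inner \<Rightarrow> 'a) \<Rightarrow> bool" where
  "coercive M \<longleftrightarrow> (\<exists>\<mu>>0. \<forall>x. Re (cinner (M x) x) \<ge> \<mu> * (norm x)\<^sup>2)"

definition bounded_selfadjoint :: "('a::complex_inner \<Rightarrow> 'a) \<Rightarrow> bool" where
  "bounded_selfadjoint M \<longleftrightarrow> (\<forall>x y. cinner (M x) y = cinner x (M y))"

definition dtn_sol :: "('a::complex_inner \<times> 'b::complex_inner) set \<Rightarrow> ('b \<times> 'a) set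
    \<Rightarrow> ('b \<Rightarrow> 'b) \<Rightarrow> ('a \<Rightarrow> 'a) \<Rightarrow> 'a \<Rightarrow> 'a" where
  "dtn_sol G D a m u0 = (THE u. u \<in> opdom G \<and> a (opapp G u) \<in> opdom D
      \<and> m u - opapp D (a (opapp G u)) = 0 \<and> u - u0 \<in> opdom (Gring D))"

definition dtn_Lambda :: "('a::complex_inner \<times> 'b::complex_inner) set \<Rightarrow> ('b \<times> 'a) set
    \<Rightarrow> ('b \<Rightarrow> 'b) \<Rightarrow> ('a \<Rightarrow> 'a) \<Rightarrow> 'a \<Rightarrow> 'b" where
  "dtn_Lambda G D a m u0 = projBD D (Dring G) (a (opapp G (dtn_sol G D a m u0)))"

definition kappa_adj :: "('a::complex_inner \<times> 'b::complex_inner) set \<Rightarrow> ('b \<times> 'a) set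
    \<Rightarrow> ('a \<Rightarrow> 'h::complex_inner) \<Rightarrow> 'h \<Rightarrow> 'a" where
  "kappa_adj G D \<kappa> \<psi> = (THE w. w \<in> BDG G D \<and> (\<forall>v \<in> BDG G D. cinner (\<kappa> v) \<psi> = gip G v w))"

definition dtn_H :: "('a::complex_inner \<times> 'b::complex_inner) set \<Rightarrow> ('b \<times> 'a) set
    \<Rightarrow> ('b \<Rightarrow> 'b) \<Rightarrow> ('a \<Rightarrow> 'a) \<Rightarrow> ('a \<Rightarrow> 'h::complex_inner) \<Rightarrow> ('h \<times> 'h) set" where
  "dtn_H G D a m \<kappa> = {(\<phi>, \<psi>). \<exists>u0 \<in> BDG G D. \<kappa> u0 = \<phi>
       \<and> dtn_Lambda G D a m u0 = opapp G (kappa_adj G D \<kappa> \<psi>)}"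

definition numerical_range :: "('a::complex_inner \<times> 'a) set \<Rightarrow> complex set" where
  "numerical_range T = {cinner x (opapp T x) | x. x \<in> opdom T \<and> norm x = 1}"

definition sector :: "real \<Rightarrow> real \<Rightarrow> complex set" where
  "sector \<gamma> \<theta> = {z. z = complex_of_real \<gamma> \<or> \<bar>Arg (z - complex_of_real \<gamma>)\<bar> \<le> \<theta>}"

definition shift_op :: "('a::complex_inner \<times> 'a) set \<Rightarrow> complex \<Rightarrow> ('a \<times> 'a) set" where
  "shift_op T c = {(x, y - c *\<^sub>C x) | x y. (x, y) \<in> T}"

definition m_sectorial :: "('a::complex_inner \<times> 'a) set \<Rightarrow> bool" where
  "m_sectorial T \<longleftrightarrow> clinear_op T \<and>
     (\<exists>\<gamma> \<theta>. 0 \<le> \<theta> \<and> \<theta> < pi / 2 \<and> numerical_range T \<subseteq> sector \<gamma> \<theta>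
        \<and> (\<exists>l::real. l < \<gamma> \<and> snd ` shift_op T (complex_of_real l) = UNIV))"

definition selfadjoint_op :: "('a::complex_inner \<times> 'a) set \<Rightarrow> bool" where
  "selfadjoint_op T \<longleftrightarrow> densely_defined T \<and> adjoint T = T"

end

theory Submission
  imports Defs
begin


lemma cinner_add_right:
  fixes x y z :: "'a::complex_inner"
  shows "cinner x (y + z) = cinner x y + cinner x z"
proof -
  have "cinner x (y + z) = cnj (cinner (y + z) x)" by (rule cinner_commute)
  also have "\<dots> = cnj (cinner y x) + cnj (cinner z x)" by (simp add: cinner_add_left)
  also have "\<dots> = cinner x y + cinner x z" using cinner_commute[of x y] cinner_commute[of x z] by simp
  finally show ?thesis .
qed

lemma cinner_scaleC_right:
  fixes x y z :: "'a::complex_inner"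
  shows "cinner x (c *\<^sub>C y) = c * cinner x y"
proof -
  have "cinner x (c *\<^sub>C y) = cnj (cinner (c *\<^sub>C y) x)" by (rule cinner_commute)
  also have "\<dots> = c * cnj (cinner y x)" by (simp add: cinner_scaleC_left)
  also have "\<dots> = c * cinner x y" using cinner_commute[of x y] by simp
  finally show ?thesis .
qed

lemma cinner_zero_left [simp]:
  fixes x y z :: "'a::complex_inner"
  shows "cinner 0 y = 0"
  using cinner_add_left[of 0 0 y] by simp

lemma cinner_zero_right [simp]:
  fixes x y z :: "'a::complex_inner"
  shows "cinner x 0 = 0"
  using cinner_add_right[of x 0 0] by simp

lemma cinner_minus_left:
  fixes x y z :: "'a::complex_inner"
  shows "cinner (- x) y = - cinner x y"
  using cinner_add_left[of x "-x" y] by (simp add: add_eq_0_iff)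

lemma cinner_minus_right:
  fixes x y z :: "'a::complex_inner"
  shows "cinner x (- y) = - cinner x y"
  using cinner_add_right[of x y "-y"] by (simp add: add_eq_0_iff)

lemma cinner_diff_left:
  fixes x y z :: "'a::complex_inner"
  shows "cinner (x - y) z = cinner x z - cinner y z"
  using cinner_add_left[of x "-y" z] by (simp add: cinner_minus_left)

lemma cinner_diff_right:
  fixes x y z :: "'a::complex_inner"
  shows "cinner x (y - z) = cinner x y - cinner x z"
  using cinner_add_right[of x y "-z"] by (simp add: cinner_minus_right)

lemma scaleC_zero_left [simp]:
  fixes x y z :: "'a::complex_inner"
  shows "0 *\<^sub>C x = 0"
  using scaleR_scaleC[of 0 x] by simp

lemma scaleC_zero_right [simp]:
  fixes x y z :: "'a::complex_inner"
  shows "c *\<^sub>C 0 = 0"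
  using scaleC_add_right[of c 0 0] by simp

lemma scaleC_minus_right:
  fixes x y z :: "'a::complex_inner"
  shows "c *\<^sub>C (- x) = - (c *\<^sub>C x)"
  using scaleC_add_right[of c x "-x"] by (simp add: add_eq_0_iff)

lemma scaleC_diff_right:
  fixes x y z :: "'a::complex_inner"
  shows "c *\<^sub>C (x - y) = c *\<^sub>C x - c *\<^sub>C y"
  using scaleC_add_right[of c x "-y"] by (simp add: scaleC_minus_right)

lemma scaleC_minus_left:
  fixes x y z :: "'a::complex_inner"
  shows "(- c) *\<^sub>C x = - (c *\<^sub>C x)"
  using scaleC_add_left[of c "-c" x] by (simp add: add_eq_0_iff)

lemma scaleC_diff_left:
  fixes x y z :: "'a::complex_inner"
  shows "(b - c) *\<^sub>C x = b *\<^sub>C x - c *\<^sub>C x"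
  using scaleC_add_left[of b "-c" x] by (simp add: scaleC_minus_left)

lemma scaleC_minus1:
  fixes x y z :: "'a::complex_inner"
  shows "(-1) *\<^sub>C x = - x"
  by (simp add: scaleC_minus_left scaleC_one)

lemma cinner_self_Re:
  fixes x y z :: "'a::complex_inner"
  shows "Re (cinner x x) = (norm x)\<^sup>2"
proof -
  have "0 \<le> sqrt (Re (cinner x x))" by (metis norm_eq_sqrt_cinner norm_ge_zero)
  hence "0 \<le> Re (cinner x x)" by simp
  thus ?thesis using norm_eq_sqrt_cinner[of x] by simp
qed

lemma cinner_self_Im:
  fixes x y z :: "'a::complex_inner"
  shows "Im (cinner x x) = 0"
proof -
  have "Im (cinner x x) = Im (cnj (cinner x x))" using cinner_commute[of x x] by simp
  thus ?thesis by simp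
qed

lemma cinner_self:
  fixes x y z :: "'a::complex_inner"
  shows "cinner x x = complex_of_real ((norm x)\<^sup>2)"
  by (simp add: complex_eq_iff cinner_self_Re cinner_self_Im)

lemma cinner_self_eq_0:
  fixes x y z :: "'a::complex_inner"
  shows "cinner x x = 0 \<longleftrightarrow> x = 0"
  by (simp add: cinner_self)

lemma cinner_scaleR_left:
  fixes x y z :: "'a::complex_inner"
  shows "cinner (scaleR r x) y = complex_of_real r * cinner x y"
  by (simp add: scaleR_scaleC cinner_scaleC_left)

lemma cinner_scaleR_right:
  fixes x y z :: "'a::complex_inner"
  shows "cinner x (scaleR r y) = complex_of_real r * cinner x y"
  by (simp add: scaleR_scaleC cinner_scaleC_right)

lemma norm_scaleC:
  fixes x y z :: "'a::complex_inner"
  shows "norm (c *\<^sub>C x) = cmod c * norm x"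
proof -
  have "(norm (c *\<^sub>C x))\<^sup>2 = Re (cinner (c *\<^sub>C x) (c *\<^sub>C x))" by (simp add: cinner_self_Re)
  also have "\<dots> = Re ((c * cnj c) * cinner x x)" by (simp add: cinner_scaleC_left cinner_scaleC_right mult.assoc mult.commute mult.left_commute)
  also have "\<dots> = Re (complex_of_real ((cmod c)\<^sup>2) * complex_of_real ((norm x)\<^sup>2))"
    by (simp only: complex_norm_square[symmetric] cinner_self)
  also have "\<dots> = (cmod c * norm x)\<^sup>2" by (simp add: power_mult_distrib)
  finally show ?thesis by (simp add: power2_eq_iff_nonneg)
qed

lemma Re_cinner_le:
  fixes x y z :: "'a::complex_inner"
  shows "Re (cinner x y) \<le> norm x * norm y"
proof (cases "x = 0 \<or> y = 0")
  case True thus ?thesis by auto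
next
  case False
  let ?a = "norm x" and ?b = "norm y"
  have ab: "?a > 0" "?b > 0" using False by auto
  have "0 \<le> Re (cinner (scaleR ?b x - scaleR ?a y) (scaleR ?b x - scaleR ?a y))"
    by (simp add: cinner_self_Re)
  also have "\<dots> = ?b^2 * ?a^2 + ?a^2 * ?b^2 - ?a * ?b * (Re (cinner x y) + Re (cinner y x))"
    by (simp add: cinner_diff_left cinner_diff_right cinner_scaleR_left cinner_scaleR_right cinner_self_Re algebra_simps power2_eq_square)
  also have "Re (cinner y x) = Re (cinner x y)" by (subst cinner_commute) simp
  finally have "?a * ?b * (2 * Re (cinner x y)) \<le> ?a * ?b * (2 * (?a * ?b))"
    by (simp add: algebra_simps power2_eq_square)
  hence "2 * Re (cinner x y) \<le> 2 * (?a * ?b)" using ab by (simp add: mult_le_cancel_left_pos)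
  thus ?thesis by simp
qed

lemma cinner_Cauchy_Schwarz:
  fixes x y z :: "'a::complex_inner"
  shows "cmod (cinner x y) \<le> norm x * norm y"
proof (cases "cinner x y = 0")
  case True thus ?thesis by simp
next
  case False
  define c where "c = cnj (cinner x y) / complex_of_real (cmod (cinner x y))"
  have cm: "cmod c = 1" using False by (simp add: c_def norm_divide)
  have "c * cinner x y = complex_of_real (cmod (cinner x y))"
  proof -
    have "cnj (cinner x y) * cinner x y = complex_of_real ((cmod (cinner x y))\<^sup>2)"
      by (subst mult.commute) (rule complex_norm_square[symmetric])
    thus ?thesis using False by (simp add: c_def power2_eq_square)
  qed
  hence "cmod (cinner x y) = Re (cinner x (c *\<^sub>C y))" by (simp add: cinner_scaleC_right)
  also have "\<dots> \<le> norm x * norm (c *\<^sub>C y)" by (rule Re_cinner_le)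
  also have "\<dots> = norm x * norm y" by (simp add: norm_scaleC cm)
  finally show ?thesis .
qed


instantiation prod :: (complex_inner, complex_inner) complex_inner
begin
definition scaleC_prod_def: "scaleC c x = (scaleC c (fst x), scaleC c (snd x))"
definition cinner_prod_def: "cinner x y = cinner (fst x) (fst y) + cinner (snd x) (snd y)"
instance
proof
  fix c b :: complex and x y z :: "'a \<times> 'b" and r :: real
  show "c *\<^sub>C (x + y) = c *\<^sub>C x + c *\<^sub>C y" by (simp add: scaleC_prod_def scaleC_add_right)
  show "(b + c) *\<^sub>C x = b *\<^sub>C x + c *\<^sub>C x" by (simp add: scaleC_prod_def scaleC_add_left)
  show "b *\<^sub>C c *\<^sub>C x = (b * c) *\<^sub>C x" by (simp add: scaleC_prod_def scaleC_scaleC)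
  show "1 *\<^sub>C x = x" by (simp add: scaleC_prod_def scaleC_one)
  show "r *\<^sub>R x = complex_of_real r *\<^sub>C x" by (simp add: scaleC_prod_def scaleR_scaleC prod_eq_iff)
  show "cinner x y = cnj (cinner y x)" by (simp add: cinner_prod_def cinner_commute[of "fst x"] cinner_commute[of "snd x"])
  show "cinner (x + y) z = cinner x z + cinner y z" by (simp add: cinner_prod_def cinner_add_left)
  show "cinner (c *\<^sub>C x) y = cnj c * cinner x y" by (simp add: cinner_prod_def scaleC_prod_def cinner_scaleC_left algebra_simps)
  show "norm x = sqrt (Re (cinner x x))" by (simp add: cinner_prod_def norm_prod_def cinner_self_Re)
qed
end

instance prod :: (chilbert_space, chilbert_space) chilbert_space ..

lemma scaleC_Pair [simp]: "c *\<^sub>C (a, b) = (c *\<^sub>C a, c *\<^sub>C b)"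
  by (simp add: scaleC_prod_def)

lemma cinner_Pair [simp]: "cinner (a, b) (a', b') = cinner a a' + cinner b b'"
  by (simp add: cinner_prod_def)

lemma bounded_bilinear_cinner: "bounded_bilinear (cinner :: 'a::complex_inner \<Rightarrow> 'a \<Rightarrow> complex)"
proof
  fix a a' b b' :: 'a and r :: real
  show "cinner (a + a') b = cinner a b + cinner a' b" by (rule cinner_add_left)
  show "cinner a (b + b') = cinner a b + cinner a b'" by (rule cinner_add_right)
  show "cinner (r *\<^sub>R a) b = r *\<^sub>R cinner a b" by (simp add: cinner_scaleR_left scaleR_conv_of_real)
  show "cinner a (r *\<^sub>R b) = r *\<^sub>R cinner a b" by (simp add: cinner_scaleR_right scaleR_conv_of_real)
  show "\<exists>K. \<forall>a b::'a. norm (cinner a b) \<le> norm a * norm b * K"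
    by (rule exI[of _ 1]) (simp add: cinner_Cauchy_Schwarz)
qed

lemmas tendsto_cinner [tendsto_intros] = bounded_bilinear.tendsto[OF bounded_bilinear_cinner]

lemma bounded_linear_scaleC: "bounded_linear (\<lambda>x::'a::complex_inner. c *\<^sub>C x)"
proof
  fix x y :: 'a and r :: real
  show "c *\<^sub>C (x + y) = c *\<^sub>C x + c *\<^sub>C y" by (rule scaleC_add_right)
  show "c *\<^sub>C (r *\<^sub>R x) = r *\<^sub>R (c *\<^sub>C x)" by (simp add: scaleR_scaleC scaleC_scaleC mult.commute)
  show "\<exists>K. \<forall>x::'a. norm (c *\<^sub>C x) \<le> norm x * K"
    by (rule exI[of _ "cmod c"]) (simp add: norm_scaleC mult.commute)
qed

lemmas tendsto_scaleC [tendsto_intros] = bounded_linear.tendsto[OF bounded_linear_scaleC]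

definition csubspace :: "'a::complex_inner set \<Rightarrow> bool" where
  "csubspace V \<longleftrightarrow> 0 \<in> V \<and> (\<forall>x\<in>V. \<forall>y\<in>V. x + y \<in> V) \<and> (\<forall>c. \<forall>x\<in>V. c *\<^sub>C x \<in> V)"

lemma csubspace_0: "csubspace V \<Longrightarrow> 0 \<in> V" by (simp add: csubspace_def)
lemma csubspace_add: "csubspace V \<Longrightarrow> x \<in> V \<Longrightarrow> y \<in> V \<Longrightarrow> x + y \<in> V" by (simp add: csubspace_def)
lemma csubspace_scaleC: "csubspace V \<Longrightarrow> x \<in> V \<Longrightarrow> c *\<^sub>C x \<in> V" by (simp add: csubspace_def)
lemma csubspace_minus: "csubspace V \<Longrightarrow> x \<in> V \<Longrightarrow> - x \<in> V"
  using csubspace_scaleC[of V x "-1"] by (simp add: scaleC_minus1)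
lemma csubspace_diff: "csubspace V \<Longrightarrow> x \<in> V \<Longrightarrow> y \<in> V \<Longrightarrow> x - y \<in> V"
  using csubspace_add[of V x "-y"] csubspace_minus[of V y] by simp
lemma csubspace_scaleR: "csubspace V \<Longrightarrow> x \<in> V \<Longrightarrow> scaleR r x \<in> V"
  by (simp add: scaleR_scaleC csubspace_scaleC)

lemma csubspace_UNIV: "csubspace UNIV" by (simp add: csubspace_def)

lemma csubspace_Int: "csubspace A \<Longrightarrow> csubspace B \<Longrightarrow> csubspace (A \<inter> B)"
  by (simp add: csubspace_def)

definition orth :: "'a::complex_inner set \<Rightarrow> 'a set" where
  "orth S = {x. \<forall>s\<in>S. cinner s x = 0}"

lemma csubspace_orth: "csubspace (orth S)"
  by (simp add: csubspace_def orth_def cinner_add_right cinner_scaleC_right)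

lemma closed_orth: "closed (orth (S::'a::complex_inner set))"
proof -
  have "orth S = (\<Inter>s\<in>S. (\<lambda>x. cinner s x) -` {0})" by (auto simp: orth_def)
  moreover have "closed ((\<lambda>x. cinner s x) -` {0})" for s :: 'a
    by (intro closed_vimage continuous_intros) (auto intro!: tendsto_cinner simp: continuous_on_def)
  ultimately show ?thesis by auto
qed

lemma norm_sq_diff_scaleR:
  fixes q w :: "'a::complex_inner"
  shows "(norm (q - s *\<^sub>R w))\<^sup>2 = (norm q)\<^sup>2 - 2 * s * Re (cinner w q) + s\<^sup>2 * (norm w)\<^sup>2"
proof -
  have "(norm (q - s *\<^sub>R w))\<^sup>2 = Re (cinner (q - s *\<^sub>R w) (q - s *\<^sub>R w))" by (simp add: cinner_self_Re)
  also have "\<dots> = Re (cinner q q) - s * Re (cinner q w) - s * Re (cinner w q) + s * s * Re (cinner w w)"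
    by (simp add: cinner_diff_left cinner_diff_right cinner_scaleR_left cinner_scaleR_right algebra_simps)
  also have "Re (cinner q w) = Re (cinner w q)" by (subst cinner_commute) simp
  finally show ?thesis by (simp add: cinner_self_Re power2_eq_square algebra_simps)
qed

lemma min_imp_Re_zero:
  fixes q w :: "'a::complex_inner"
  assumes "\<And>s::real. norm q \<le> norm (q - s *\<^sub>R w)"
  shows "Re (cinner w q) = 0"
proof (cases "w = 0")
  case True thus ?thesis by simp
next
  case False
  define r where "r = Re (cinner w q)"
  define n where "n = (norm w)\<^sup>2"
  have n: "n > 0" using False by (simp add: n_def)
  have "(norm q)\<^sup>2 \<le> (norm (q - (r / n) *\<^sub>R w))\<^sup>2"
    using assms[of "r/n"] by (simp add: power_mono)
  also have "\<dots> = (norm q)\<^sup>2 - 2 * (r/n) * r + (r/n)\<^sup>2 * n"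
    by (simp add: norm_sq_diff_scaleR r_def n_def)
  also have "\<dots> = (norm q)\<^sup>2 - r\<^sup>2 / n" using n by (simp add: field_simps power2_eq_square)
  finally have "r\<^sup>2 / n \<le> 0" by simp
  hence "r\<^sup>2 \<le> 0" using n by (simp add: divide_le_0_iff)
  thus ?thesis by (simp add: r_def)
qed

lemma min_imp_orth:
  fixes q v :: "'a::complex_inner"
  assumes "\<And>w. w \<in> V \<Longrightarrow> norm q \<le> norm (q - w)" "csubspace V" "v \<in> V"
  shows "cinner v q = 0"
proof -
  have "Re (cinner v q) = 0"
    by (rule min_imp_Re_zero) (use assms csubspace_scaleR in blast)
  moreover have "Re (cinner (\<i> *\<^sub>C v) q) = 0"
    by (rule min_imp_Re_zero) (use assms csubspace_scaleR csubspace_scaleC in blast)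
  hence "Im (cinner v q) = 0" by (simp add: cinner_scaleC_left)
  ultimately show ?thesis by (simp add: complex_eq_iff)
qed

lemma parallelogram:
  fixes a b :: "'a::complex_inner"
  shows "(norm (a + b))\<^sup>2 + (norm (a - b))\<^sup>2 = 2 * (norm a)\<^sup>2 + 2 * (norm b)\<^sup>2"
proof -
  have "(norm (a + b))\<^sup>2 + (norm (a - b))\<^sup>2 = Re (cinner (a+b) (a+b)) + Re (cinner (a-b) (a-b))"
    by (simp add: cinner_self_Re)
  also have "\<dots> = 2 * Re (cinner a a) + 2 * Re (cinner b b)"
    by (simp add: cinner_add_left cinner_add_right cinner_diff_left cinner_diff_right)
  finally show ?thesis by (simp add: cinner_self_Re)
qed

lemma projection_exists:
  fixes x :: "'a::chilbert_space"
  assumes V: "csubspace V" "closed V"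
  shows "\<exists>p\<in>V. \<forall>v\<in>V. cinner v (x - p) = 0"
proof -
  define d where "d = Inf ((\<lambda>v. norm (x - v)) ` V)"
  have ne: "(\<lambda>v. norm (x - v)) ` V \<noteq> {}" using csubspace_0[OF V(1)] by auto
  have bdd: "bdd_below ((\<lambda>v. norm (x - v)) ` V)" by (rule bdd_belowI[of _ 0]) auto
  have dle: "d \<le> norm (x - v)" if "v \<in> V" for v
    unfolding d_def using bdd that by (simp add: cInf_lower)
  have d0: "0 \<le> d" unfolding d_def using ne by (auto intro!: cInf_greatest)
  have ex: "\<exists>v\<in>V. (norm (x - v))\<^sup>2 < d\<^sup>2 + 1 / (Suc n)" for n :: nat
  proof -
    have "d < sqrt (d\<^sup>2 + 1 / Suc n)" by (rule real_less_rsqrt) simp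
    then obtain v where v: "v \<in> V" "norm (x - v) < sqrt (d\<^sup>2 + 1 / Suc n)"
    proof -
      have "Inf ((\<lambda>v. norm (x - v)) ` V) < sqrt (d\<^sup>2 + 1 / Suc n)" using \<open>d < _\<close> by (simp add: d_def)
      from cInf_lessD[OF ne this] show ?thesis using that by blast
    qed
    have "(norm (x - v))\<^sup>2 < (sqrt (d\<^sup>2 + 1 / Suc n))\<^sup>2"
      by (rule power_strict_mono) (use v in auto)
    also have "\<dots> = d\<^sup>2 + 1 / Suc n" by (rule real_sqrt_pow2) simp
    finally show ?thesis using v(1) by blast
  qed
  then obtain v where v: "\<And>n. v n \<in> V" "\<And>n. (norm (x - v n))\<^sup>2 < d\<^sup>2 + 1 / Suc n"
    using bchoice[of UNIV] by (metis (mono_tags, lifting) choice)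
  have key: "(norm (v n - v m))\<^sup>2 \<le> 2 / Suc n + 2 / Suc m" for n m
  proof -
    have mid: "(1/2::real) *\<^sub>R (v n + v m) \<in> V"
      using V v(1) by (simp add: csubspace_scaleR csubspace_add)
    have "2 * d \<le> 2 * norm (x - (1/2::real) *\<^sub>R (v n + v m))" using dle[OF mid] by simp
    also have "\<dots> = norm ((x - v n) + (x - v m))"
    proof -
      have "(x - v n) + (x - v m) = (2::real) *\<^sub>R (x - (1/2::real) *\<^sub>R (v n + v m))"
        by (simp add: algebra_simps scaleR_add_right scaleR_2)
      thus ?thesis by simp
    qed
    finally have "(2 * d)\<^sup>2 \<le> (norm ((x - v n) + (x - v m)))\<^sup>2"
      by (rule power_mono) (use d0 in simp)
    moreover have "(norm ((x - v n) + (x - v m)))\<^sup>2 + (norm ((x - v n) - (x - v m)))\<^sup>2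
        = 2 * (norm (x - v n))\<^sup>2 + 2 * (norm (x - v m))\<^sup>2" by (rule parallelogram)
    moreover have "(x - v n) - (x - v m) = v m - v n" by simp
    moreover have "norm (v m - v n) = norm (v n - v m)" by (rule norm_minus_commute)
    ultimately show ?thesis using v(2)[of n] v(2)[of m] by (simp add: power_mult_distrib)
  qed
  have "Cauchy v"
  proof (rule CauchyI)
    fix e :: real assume e: "0 < e"
    obtain N :: nat where N: "4 / e\<^sup>2 < N" using reals_Archimedean2 by blast
    show "\<exists>M. \<forall>m\<ge>M. \<forall>n\<ge>M. norm (v m - v n) < e"
    proof (intro exI allI impI)
      fix m n assume mn: "N \<le> m" "N \<le> n"
      have "2 / Suc m \<le> 2 / Suc N" using mn by (simp add: frac_le)
      moreover have "2 / Suc n \<le> 2 / Suc N" using mn by (simp add: frac_le)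
      moreover have "4 / Suc N < e\<^sup>2"
      proof -
        have "4 / e\<^sup>2 < Suc N" using N by simp
        thus ?thesis using e by (simp add: field_simps)
      qed
      ultimately have "(norm (v m - v n))\<^sup>2 < e\<^sup>2" using key[of m n] by simp
      thus "norm (v m - v n) < e" using e by (simp add: power_less_imp_less_base)
    qed
  qed
  then obtain p where p: "v \<longlonglongrightarrow> p" using Cauchy_convergent_iff convergent_def by blast
  have pV: "p \<in> V" using closed_sequentially[OF V(2) v(1) p] .
  have "(\<lambda>n. (norm (x - v n))\<^sup>2) \<longlonglongrightarrow> (norm (x - p))\<^sup>2"
    by (intro tendsto_intros p)
  moreover have "(\<lambda>n. d\<^sup>2 + 1 / Suc n) \<longlonglongrightarrow> d\<^sup>2 + 0"
    by (intro tendsto_intros LIMSEQ_Suc[OF lim_inverse_n'])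
  moreover have "\<forall>n. (norm (x - v n))\<^sup>2 \<le> d\<^sup>2 + 1 / Suc n"
    using v(2) less_imp_le by blast
  ultimately have "(norm (x - p))\<^sup>2 \<le> d\<^sup>2 + 0"
    using LIMSEQ_le by blast
  hence "(norm (x - p))\<^sup>2 \<le> d\<^sup>2" by simp
  hence nd: "norm (x - p) \<le> d" by (rule power2_le_imp_le[OF _ d0])
  have min: "norm (x - p) \<le> norm ((x - p) - w)" if "w \<in> V" for w
  proof -
    have "d \<le> norm (x - (p + w))" by (rule dle) (rule csubspace_add[OF V(1) pV that])
    moreover have "x - (p + w) = (x - p) - w" by (simp add: diff_diff_eq)
    ultimately show ?thesis using nd by simp
  qed
  have "\<forall>v\<in>V. cinner v (x - p) = 0"
  proof
    fix v assume "v \<in> V"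
    show "cinner v (x - p) = 0" by (rule min_imp_orth[OF min V(1) \<open>v \<in> V\<close>])
  qed
  thus ?thesis using pV by blast
qed


lemma closed_csubspace_kernel:
  fixes F :: "'a::complex_inner \<Rightarrow> complex"
  assumes V: "csubspace V" "closed V"
    and add: "\<forall>x\<in>V. \<forall>y\<in>V. F (x + y) = F x + F y"
    and bd: "\<forall>x\<in>V. cmod (F x) \<le> K * norm x"
  shows "closed {v\<in>V. F v = 0}"
  unfolding closed_sequential_limits
proof (intro allI impI)
  fix x l assume a: "(\<forall>n. x n \<in> {v\<in>V. F v = 0}) \<and> x \<longlonglongrightarrow> l"
  have lV: "l \<in> V" using closed_sequentially[OF V(2), of x l] a by auto
  have diff: "F (l - x n) = F l" for n
  proof -
    have xn: "x n \<in> V" "F (x n) = 0" using a by auto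
    have "F ((l - x n) + x n) = F (l - x n) + F (x n)"
      using add csubspace_diff[OF V(1) lV xn(1)] xn(1) by blast
    thus ?thesis using xn(2) by simp
  qed
  have "(\<lambda>n. K * norm (l - x n)) \<longlonglongrightarrow> K * norm (l - l)"
    by (intro tendsto_intros a[THEN conjunct2])
  hence lim: "(\<lambda>n. K * norm (l - x n)) \<longlonglongrightarrow> 0" by simp
  have "\<forall>n. cmod (F l) \<le> K * norm (l - x n)"
    using bd csubspace_diff[OF V(1) lV] a diff by (metis (no_types, lifting) mem_Collect_eq)
  hence "cmod (F l) \<le> 0" using LIMSEQ_le[OF tendsto_const lim] by blast
  thus "l \<in> {v\<in>V. F v = 0}" using lV by simp
qed

lemma representer_unique:
  fixes w1 w2 :: "'a::complex_inner"
  assumes "csubspace V" "w1 \<in> V" "w2 \<in> V" "\<forall>v\<in>V. cinner v w1 = cinner v w2"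
  shows "w1 = w2"
proof -
  have "cinner (w1 - w2) (w1 - w2) = 0"
    using assms csubspace_diff[OF assms(1-3)] by (simp add: cinner_diff_right)
  thus ?thesis by (simp add: cinner_self_eq_0)
qed

lemma riesz:
  fixes F :: "'a::chilbert_space \<Rightarrow> complex"
  assumes V: "csubspace V" "closed V"
    and add: "\<forall>x\<in>V. \<forall>y\<in>V. F (x + y) = F x + F y"
    and sc: "\<forall>c. \<forall>x\<in>V. F (c *\<^sub>C x) = cnj c * F x"
    and bd: "\<forall>x\<in>V. cmod (F x) \<le> K * norm x"
  shows "\<exists>w\<in>V. \<forall>v\<in>V. F v = cinner v w"
proof -
  define N where "N = {v\<in>V. F v = 0}"
  have F0: "F 0 = 0" using add csubspace_0[OF V(1)] by (metis add_0 add_cancel_right_right)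
  have Fdiff: "F (x - y) = F x - F y" if "x \<in> V" "y \<in> V" for x y
  proof -
    have "F ((x - y) + y) = F (x - y) + F y" using add csubspace_diff[OF V(1) that] that by blast
    thus ?thesis by simp
  qed
  have N: "csubspace N" "closed N"
    unfolding N_def using closed_csubspace_kernel[OF V add bd] V(1) add sc F0
    by (auto simp: csubspace_def)
  show ?thesis
  proof (cases "N = V")
    case True
    have "\<forall>v\<in>V. F v = cinner v 0" using True unfolding N_def by auto
    thus ?thesis using csubspace_0[OF V(1)] by blast
  next
    case False
    then obtain z where z: "z \<in> V" "F z \<noteq> 0" unfolding N_def by auto
    obtain p where p: "p \<in> N" "\<forall>v\<in>N. cinner v (z - p) = 0" using projection_exists[OF N, of z] by blast
    define q where "q = z - p"
    have pV: "p \<in> V" "F p = 0" using p unfolding N_def by auto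
    have qV: "q \<in> V" unfolding q_def using csubspace_diff[OF V(1) z(1) pV(1)] .
    have Fq: "F q = F z" unfolding q_def using Fdiff[OF z(1) pV(1)] pV by simp
    hence q0: "q \<noteq> 0" using z F0 by auto
    define w where "w = (F q / complex_of_real ((norm q)\<^sup>2)) *\<^sub>C q"
    have "F v = cinner v w" if v: "v \<in> V" for v
    proof -
      define \<alpha> where "\<alpha> = cnj (F v / F q)"
      have aq: "\<alpha> *\<^sub>C q \<in> V" using csubspace_scaleC[OF V(1) qV] .
      have "F (v - \<alpha> *\<^sub>C q) = F v - cnj \<alpha> * F q" using Fdiff[OF v aq] sc qV by simp
      also have "\<dots> = 0" using Fq z by (simp add: \<alpha>_def)
      finally have "v - \<alpha> *\<^sub>C q \<in> N" unfolding N_def using csubspace_diff[OF V(1) v aq] by simp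
      hence "cinner (v - \<alpha> *\<^sub>C q) q = 0" using p(2) q_def by simp
      hence "cinner v q = cnj \<alpha> * cinner q q" by (simp add: cinner_diff_left cinner_scaleC_left)
      hence "cinner v q = (F v / F q) * complex_of_real ((norm q)\<^sup>2)" by (simp add: \<alpha>_def cinner_self)
      thus ?thesis using q0 Fq z by (simp add: w_def cinner_scaleC_right field_simps)
    qed
    moreover have "w \<in> V" unfolding w_def using csubspace_scaleC[OF V(1) qV] .
    ultimately show ?thesis by blast
  qed
qed

lemma lax_milgram:
  fixes s :: "'a::chilbert_space \<Rightarrow> 'a \<Rightarrow> complex" and F :: "'a \<Rightarrow> complex"
  assumes V: "csubspace V" "closed V"
    and sadd: "\<forall>v\<in>V. \<forall>v'\<in>V. \<forall>u\<in>V. s (v + v') u = s v u + s v' u"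
    and ssc: "\<forall>c. \<forall>v\<in>V. \<forall>u\<in>V. s (c *\<^sub>C v) u = cnj c * s v u"
    and sadd2: "\<forall>v\<in>V. \<forall>u\<in>V. \<forall>u'\<in>V. s v (u + u') = s v u + s v u'"
    and ssc2: "\<forall>c. \<forall>v\<in>V. \<forall>u\<in>V. s v (c *\<^sub>C u) = c * s v u"
    and sbd: "\<forall>v\<in>V. \<forall>u\<in>V. cmod (s v u) \<le> M * norm v * norm u" and M: "0 \<le> M"
    and coer: "\<mu> > 0" "\<forall>u\<in>V. \<mu> * (norm u)\<^sup>2 \<le> Re (s u u)"
    and add: "\<forall>x\<in>V. \<forall>y\<in>V. F (x + y) = F x + F y"
    and sc: "\<forall>c. \<forall>x\<in>V. F (c *\<^sub>C x) = cnj c * F x"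
    and bd: "\<forall>x\<in>V. cmod (F x) \<le> K * norm x"
  shows "\<exists>u\<in>V. \<forall>v\<in>V. s v u = F v"
proof -
  have rep: "\<exists>w\<in>V. \<forall>v\<in>V. s v u = cinner v w" if u: "u \<in> V" for u
    by (rule riesz[OF V, of "\<lambda>v. s v u" "M * norm u"])
       (use sadd ssc sbd u in \<open>auto simp: mult.commute mult.left_commute\<close>)
  define S where "S u = (SOME w. w \<in> V \<and> (\<forall>v\<in>V. s v u = cinner v w))" for u
  have S: "S u \<in> V" "\<forall>v\<in>V. s v u = cinner v (S u)" if "u \<in> V" for u
    using someI_ex[OF rep[OF that, unfolded Bex_def]] unfolding S_def by blast+
  have Sadd: "S (u + u') = S u + S u'" if "u \<in> V" "u' \<in> V" for u u'
    by (rule representer_unique[OF V(1)])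
       (use S that sadd2 csubspace_add[OF V(1)] in \<open>auto simp: cinner_add_right\<close>)
  have Ssc: "S (c *\<^sub>C u) = c *\<^sub>C S u" if "u \<in> V" for u c
    by (rule representer_unique[OF V(1)])
       (use S that ssc2 csubspace_scaleC[OF V(1)] in \<open>auto simp: cinner_scaleC_right\<close>)
  have Sdiff: "S (u - u') = S u - S u'" if "u \<in> V" "u' \<in> V" for u u'
    using Sadd[of "u - u'" u'] that csubspace_diff[OF V(1) that] by simp
  have Sbd: "norm (S u) \<le> M * norm u" if u: "u \<in> V" for u
  proof -
    have "(norm (S u))\<^sup>2 = Re (cinner (S u) (S u))" by (simp add: cinner_self_Re)
    also have "\<dots> = Re (s (S u) u)" using S[OF u] by simp
    also have "\<dots> \<le> cmod (s (S u) u)" by (rule complex_Re_le_cmod)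
    also have "\<dots> \<le> M * norm (S u) * norm u" using sbd S u by blast
    finally have "norm (S u) * norm (S u) \<le> norm (S u) * (M * norm u)" by (simp add: power2_eq_square algebra_simps)
    thus ?thesis
      by (cases "S u = 0") (use u M in \<open>auto simp: mult_le_cancel_left_pos\<close>)
  qed
  have Slow: "\<mu> * norm u \<le> norm (S u)" if u: "u \<in> V" for u
  proof -
    have "\<mu> * (norm u)\<^sup>2 \<le> Re (s u u)" using coer u by blast
    also have "\<dots> = Re (cinner u (S u))" using S[OF u] u by simp
    also have "\<dots> \<le> norm u * norm (S u)" by (rule Re_cinner_le)
    finally have "norm u * (\<mu> * norm u) \<le> norm u * norm (S u)" by (simp add: power2_eq_square algebra_simps)
    thus ?thesis by (cases "u = 0") (auto simp: mult_le_cancel_left_pos)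
  qed
  define R where "R = S ` V"
  have R: "csubspace R"
    unfolding R_def csubspace_def
  proof (intro conjI ballI allI)
    show "0 \<in> S ` V" using Ssc[of 0 0] csubspace_0[OF V(1)] by (metis image_eqI scaleC_zero_left)
    show "x + y \<in> S ` V" if xy: "x \<in> S ` V" "y \<in> S ` V" for x y
    proof -
      obtain a b where ab: "a \<in> V" "b \<in> V" "x = S a" "y = S b" using xy by blast
      have "x + y = S (a + b)" using Sadd[OF ab(1,2)] ab(3,4) by simp
      thus ?thesis using csubspace_add[OF V(1) ab(1,2)] by blast
    qed
    show "c *\<^sub>C x \<in> S ` V" if xc: "x \<in> S ` V" for x c
    proof -
      obtain a where ab: "a \<in> V" "x = S a" using xc by blast
      have "c *\<^sub>C x = S (c *\<^sub>C a)" using Ssc[OF ab(1)] ab(2) by simp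
      thus ?thesis using csubspace_scaleC[OF V(1) ab(1)] by blast
    qed
  qed
  have Rc: "closed R"
    unfolding closed_sequential_limits
  proof (intro allI impI)
    fix y l assume a: "(\<forall>n. y n \<in> R) \<and> y \<longlonglongrightarrow> l"
    have "\<forall>n. \<exists>v. v \<in> V \<and> y n = S v" using a unfolding R_def by blast
    hence "\<exists>u. \<forall>n. u n \<in> V \<and> y n = S (u n)" by (rule choice)
    then obtain u where u: "\<And>n. u n \<in> V" "\<And>n. y n = S (u n)" by blast
    have "Cauchy u"
    proof (rule CauchyI)
      fix e :: real assume e: "0 < e"
      have "Cauchy y" using a convergent_Cauchy convergentI by blast
      then obtain N where N: "\<forall>m\<ge>N. \<forall>n\<ge>N. norm (y m - y n) < \<mu> * e"
        using Cauchy_iff[THEN iffD1, rule_format, of y "\<mu> * e"] e coer(1) by auto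
      show "\<exists>M. \<forall>m\<ge>M. \<forall>n\<ge>M. norm (u m - u n) < e"
      proof (intro exI allI impI)
        fix m n assume mn: "N \<le> m" "N \<le> n"
        have "\<mu> * norm (u m - u n) \<le> norm (S (u m - u n))" using Slow csubspace_diff[OF V(1) u(1) u(1)] by blast
        also have "\<dots> = norm (y m - y n)" using Sdiff u by simp
        also have "\<dots> < \<mu> * e" using N mn by blast
        finally show "norm (u m - u n) < e" using coer(1) by simp
      qed
    qed
    then obtain u0 where u0: "u \<longlonglongrightarrow> u0" using Cauchy_convergent_iff convergent_def by blast
    have u0V: "u0 \<in> V" using closed_sequentially[OF V(2) u(1) u0] .
    have "(\<lambda>n. M * norm (u n - u0)) \<longlonglongrightarrow> M * norm (u0 - u0)" by (intro tendsto_intros u0)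
    hence "(\<lambda>n. M * norm (u n - u0)) \<longlonglongrightarrow> 0" by simp
    moreover have "norm (y n - S u0) \<le> M * norm (u n - u0)" for n
      using Sbd[OF csubspace_diff[OF V(1) u(1) u0V]] Sdiff[OF u(1) u0V] u(2) by simp
    ultimately have "(\<lambda>n. y n - S u0) \<longlonglongrightarrow> 0"
      using Lim_null_comparison[OF always_eventually, of "\<lambda>n. y n - S u0" "\<lambda>n. M * norm (u n - u0)"] by blast
    hence "y \<longlonglongrightarrow> S u0" by (simp add: LIM_zero_iff)
    hence "l = S u0" using a LIMSEQ_unique by blast
    thus "l \<in> R" unfolding R_def using u0V by blast
  qed
  obtain w where w: "w \<in> V" "\<forall>v\<in>V. F v = cinner v w" using riesz[OF V add sc bd] by blast
  obtain r where r: "r \<in> R" "\<forall>t\<in>R. cinner t (w - r) = 0" using projection_exists[OF R Rc, of w] by blast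
  obtain u where u: "u \<in> V" "r = S u" using r(1) unfolding R_def by blast
  define q where "q = w - r"
  have qV: "q \<in> V" unfolding q_def using csubspace_diff[OF V(1) w(1) S(1)[OF u(1)]] u(2) by simp
  have "cinner (S q) q = 0" using r(2) qV unfolding R_def q_def by blast
  hence "cinner q (S q) = 0" by (subst cinner_commute) simp
  hence "s q q = 0" using S(2)[OF qV] qV by simp
  hence "\<mu> * (norm q)\<^sup>2 \<le> 0" using coer(2) qV by force
  hence "q = 0" using coer(1) by (simp add: mult_le_0_iff)
  hence "w = S u" using u(2) by (simp add: q_def)
  hence "\<forall>v\<in>V. s v u = F v" using w S(2)[OF u(1)] by simp
  thus ?thesis using u(1) by blast
qed

lemma closure_csubspace:
  fixes S :: "'a::complex_inner set"
  assumes S: "csubspace S"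
  shows "csubspace (closure S)"
proof -
  have z: "0 \<in> closure S" using csubspace_0[OF S] closure_subset by blast
  have ad: "x + y \<in> closure S" if xy: "x \<in> closure S" "y \<in> closure S" for x y
  proof -
    obtain a where a: "\<forall>n. a n \<in> S" "a \<longlonglongrightarrow> x" using xy(1) unfolding closure_sequential by blast
    obtain b where b: "\<forall>n. b n \<in> S" "b \<longlonglongrightarrow> y" using xy(2) unfolding closure_sequential by blast
    have "\<forall>n. a n + b n \<in> S" using a(1) b(1) csubspace_add[OF S] by blast
    moreover have "(\<lambda>n. a n + b n) \<longlonglongrightarrow> x + y" by (intro tendsto_intros a(2) b(2))
    ultimately show ?thesis unfolding closure_sequential by (intro exI[of _ "\<lambda>n. a n + b n"] conjI)
  qed
  have sc: "c *\<^sub>C x \<in> closure S" if xc: "x \<in> closure S" for x c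
  proof -
    obtain a where a: "\<forall>n. a n \<in> S" "a \<longlonglongrightarrow> x" using xc unfolding closure_sequential by blast
    have "\<forall>n. c *\<^sub>C a n \<in> S" using a(1) csubspace_scaleC[OF S] by blast
    moreover have "(\<lambda>n. c *\<^sub>C a n) \<longlonglongrightarrow> c *\<^sub>C x" by (intro tendsto_intros a(2))
    ultimately show ?thesis unfolding closure_sequential by (intro exI[of _ "\<lambda>n. c *\<^sub>C a n"] conjI)
  qed
  show ?thesis unfolding csubspace_def using z ad sc by blast
qed

lemma orth_dense_zero:
  fixes h :: "'a::complex_inner"
  assumes "closure S = UNIV" "\<forall>s\<in>S. cinner s h = 0"
  shows "h = 0"
proof -
  have "h \<in> closure S" using assms(1) by simp
  then obtain a where a: "\<forall>n. a n \<in> S" "a \<longlonglongrightarrow> h" unfolding closure_sequential by blast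
  have "(\<lambda>n. cinner (a n) h) \<longlonglongrightarrow> cinner h h" by (intro tendsto_intros a)
  moreover have "(\<lambda>n. cinner (a n) h) = (\<lambda>n. 0)" using a assms(2) by auto
  ultimately have "cinner h h = 0" using LIMSEQ_unique tendsto_const by metis
  thus ?thesis by (simp add: cinner_self_eq_0)
qed

lemma dense_if_orth_zero:
  fixes S :: "'a::chilbert_space set"
  assumes "csubspace S" "\<And>h. \<forall>s\<in>S. cinner s h = 0 \<Longrightarrow> h = 0"
  shows "closure S = UNIV"
proof -
  have C: "csubspace (closure S)" "closed (closure S)" using closure_csubspace[OF assms(1)] by auto
  have "x \<in> closure S" for x
  proof -
    obtain p where p: "p \<in> closure S" "\<forall>v\<in>closure S. cinner v (x - p) = 0"
      using projection_exists[OF C, of x] by blast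
    hence "x - p = 0" using assms(2) closure_subset by blast
    thus ?thesis using p by simp
  qed
  thus ?thesis by auto
qed


lemma clinear_op_csubspace: "clinear_op T \<Longrightarrow> csubspace T"
  unfolding clinear_op_def csubspace_def zero_prod_def
proof (intro conjI ballI allI)
  assume a: "(0, 0) \<in> T \<and> (\<forall>x y x' y'. (x, y) \<in> T \<longrightarrow> (x', y') \<in> T \<longrightarrow> (x + x', y + y') \<in> T) \<and>
    (\<forall>c x y. (x, y) \<in> T \<longrightarrow> (c *\<^sub>C x, c *\<^sub>C y) \<in> T) \<and> (\<forall>y. (0, y) \<in> T \<longrightarrow> y = 0)"
  show "(0, 0) \<in> T" using a by blast
  fix p q assume "p \<in> T" "q \<in> T"
  thus "p + q \<in> T" using a by (metis add_Pair prod.collapse)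
next
  assume a: "(0, 0) \<in> T \<and> (\<forall>x y x' y'. (x, y) \<in> T \<longrightarrow> (x', y') \<in> T \<longrightarrow> (x + x', y + y') \<in> T) \<and>
    (\<forall>c x y. (x, y) \<in> T \<longrightarrow> (c *\<^sub>C x, c *\<^sub>C y) \<in> T) \<and> (\<forall>y. (0, y) \<in> T \<longrightarrow> y = 0)"
  fix c p assume "p \<in> T"
  thus "c *\<^sub>C p \<in> T" using a by (metis scaleC_Pair prod.collapse)
qed

lemma pythag:
  fixes a b :: "'a::complex_inner"
  assumes "cinner a b = 0"
  shows "(norm (a + b))\<^sup>2 = (norm a)\<^sup>2 + (norm b)\<^sup>2"
proof -
  have "cinner b a = 0" using assms by (subst cinner_commute) simp
  hence "Re (cinner (a + b) (a + b)) = Re (cinner a a) + Re (cinner b b)"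
    using assms by (simp add: cinner_add_left cinner_add_right)
  thus ?thesis by (simp add: cinner_self_Re)
qed

lemma norm_Pair_sq: "(norm (x, y))\<^sup>2 = (norm x)\<^sup>2 + (norm y)\<^sup>2"
  by (simp add: norm_prod_def)

lemma norm_fst_le: "norm x \<le> norm (x, y)"
  by (simp add: norm_prod_def real_le_rsqrt)

lemma norm_snd_le: "norm y \<le> norm (x, y)"
  by (simp add: norm_prod_def real_le_rsqrt)

context
  fixes T :: "('a::complex_inner \<times> 'b::complex_inner) set"
  assumes T: "clinear_op T"
begin

lemma op_zero: "(0, 0) \<in> T" using T by (simp add: clinear_op_def)
lemma op_add: "(x, y) \<in> T \<Longrightarrow> (x', y') \<in> T \<Longrightarrow> (x + x', y + y') \<in> T"
  using T by (simp add: clinear_op_def)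
lemma op_scale: "(x, y) \<in> T \<Longrightarrow> (c *\<^sub>C x, c *\<^sub>C y) \<in> T"
  using T by (simp add: clinear_op_def)
lemma op_minus: "(x, y) \<in> T \<Longrightarrow> (- x, - y) \<in> T"
  using op_scale[of x y "-1"] by (simp add: scaleC_minus1)
lemma op_diff: "(x, y) \<in> T \<Longrightarrow> (x', y') \<in> T \<Longrightarrow> (x - x', y - y') \<in> T"
  using op_add[of x y "-x'" "-y'"] op_minus[of x' y'] by simp
lemma op_single: "(0, y) \<in> T \<Longrightarrow> y = 0"
  using T by (simp add: clinear_op_def)
lemma op_unique: "(x, y) \<in> T \<Longrightarrow> (x, y') \<in> T \<Longrightarrow> y = y'"
  using op_diff[of x y x y'] op_single by force
lemma opapp_eq: "(x, y) \<in> T \<Longrightarrow> opapp T x = y"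
  unfolding opapp_def using op_unique by blast
lemma in_dom: "(x, y) \<in> T \<Longrightarrow> x \<in> opdom T"
  unfolding opdom_def by force
lemma dom_graph: "x \<in> opdom T \<Longrightarrow> (x, opapp T x) \<in> T"
  unfolding opdom_def using opapp_eq by force
lemma dom_iff: "x \<in> opdom T \<longleftrightarrow> (\<exists>y. (x, y) \<in> T)"
  unfolding opdom_def by force
lemma dom_zero: "0 \<in> opdom T" using in_dom op_zero by blast
lemma opapp_zero: "opapp T 0 = 0" using opapp_eq op_zero by blast
lemma dom_add: "x \<in> opdom T \<Longrightarrow> x' \<in> opdom T \<Longrightarrow> x + x' \<in> opdom T"
  using in_dom op_add dom_graph by blast
lemma dom_diff: "x \<in> opdom T \<Longrightarrow> x' \<in> opdom T \<Longrightarrow> x - x' \<in> opdom T"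
  using in_dom op_diff dom_graph by blast
lemma dom_scale: "x \<in> opdom T \<Longrightarrow> c *\<^sub>C x \<in> opdom T"
  using in_dom op_scale dom_graph by blast
lemma opapp_add: "x \<in> opdom T \<Longrightarrow> x' \<in> opdom T \<Longrightarrow> opapp T (x + x') = opapp T x + opapp T x'"
  using opapp_eq op_add dom_graph by blast
lemma opapp_diff: "x \<in> opdom T \<Longrightarrow> x' \<in> opdom T \<Longrightarrow> opapp T (x - x') = opapp T x - opapp T x'"
  using opapp_eq op_diff dom_graph by blast
lemma opapp_scale: "x \<in> opdom T \<Longrightarrow> opapp T (c *\<^sub>C x) = c *\<^sub>C opapp T x"
  using opapp_eq op_scale dom_graph by blast
lemma csubspace_dom: "csubspace (opdom T)"
  unfolding csubspace_def using dom_zero dom_add dom_scale by blast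

end

lemmas continuous_on_cinner [continuous_intros] = bounded_bilinear.continuous_on[OF bounded_bilinear_cinner]

lemma csubspace_clinear:
  assumes "csubspace T" "\<And>y. (0, y) \<in> T \<Longrightarrow> y = 0"
  shows "clinear_op T"
  unfolding clinear_op_def
proof (intro conjI allI impI)
  show "(0, 0) \<in> T" using csubspace_0[OF assms(1)] by (simp add: zero_prod_def)
  fix x y x' y' assume "(x, y) \<in> T" "(x', y') \<in> T"
  from csubspace_add[OF assms(1) this] show "(x + x', y + y') \<in> T" by simp
next
  fix c x y assume "(x, y) \<in> T"
  from csubspace_scaleC[OF assms(1) this, of c] show "(c *\<^sub>C x, c *\<^sub>C y) \<in> T" by simp
next
  fix y assume "(0, y) \<in> T" thus "y = 0" by (rule assms(2))
qed

lemma adjoint_iff: "(y, z) \<in> adjoint T \<longleftrightarrow> (\<forall>x w. (x, w) \<in> T \<longrightarrow> cinner w y = cinner x z)"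
  by (simp add: adjoint_def)

lemma neg_op_iff:
  fixes T :: "('a \<times> 'b::group_add) set"
  shows "(x, y) \<in> neg_op T \<longleftrightarrow> (x, - y) \<in> T"
proof
  assume "(x, y) \<in> neg_op T"
  then obtain x' y' where e: "(x, y) = (x', - y')" and T: "(x', y') \<in> T" unfolding neg_op_def by blast
  have "x = x'" "- y = y'" using e by auto
  thus "(x, - y) \<in> T" using T by simp
next
  assume "(x, - y) \<in> T"
  hence "(x, - (- y)) \<in> neg_op T" unfolding neg_op_def by blast
  thus "(x, y) \<in> neg_op T" by simp
qed

lemma csubspace_adjoint: "csubspace (adjoint T)"
  unfolding csubspace_def
proof (intro conjI ballI allI)
  show "0 \<in> adjoint T" by (simp add: zero_prod_def adjoint_def)
  fix p q assume "p \<in> adjoint T" "q \<in> adjoint T"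
  thus "p + q \<in> adjoint T"
    by (cases p, cases q) (simp add: adjoint_def cinner_add_right)
next
  fix c p assume "p \<in> adjoint T"
  thus "c *\<^sub>C p \<in> adjoint T"
    by (cases p) (simp add: adjoint_def cinner_scaleC_right)
qed

lemma closed_adjoint: "closed (adjoint (T::('a::complex_inner \<times> 'b::complex_inner) set))"
proof -
  have "adjoint T = (\<Inter>p\<in>T. {q. cinner (snd p) (fst q) - cinner (fst p) (snd q) = 0})"
    unfolding adjoint_def by (auto, metis fst_conv snd_conv)
  moreover have "closed {q. cinner (snd p) (fst q) - cinner (fst p) (snd q) = 0}" for p :: "'a \<times> 'b"
    by (intro closed_Collect_eq continuous_intros)
  ultimately show ?thesis by auto
qed

lemma adjoint_clinear:
  assumes "densely_defined T"
  shows "clinear_op (adjoint T)"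
proof -
  have "z = 0" if "(0, z) \<in> adjoint T" for z
  proof (rule orth_dense_zero)
    show "closure (opdom T) = UNIV" using assms by (simp add: densely_defined_def)
    show "\<forall>s\<in>opdom T. cinner s z = 0"
      using that unfolding adjoint_def opdom_def by force
  qed
  thus ?thesis using csubspace_clinear[OF csubspace_adjoint[of T]] by blast
qed

lemma csubspace_neg_op:
  assumes T: "csubspace T"
  shows "csubspace (neg_op T)"
  unfolding csubspace_def
proof (intro conjI ballI allI)
  show "0 \<in> neg_op T" using csubspace_0[OF T] by (simp add: zero_prod_def neg_op_iff)
  fix p q assume "p \<in> neg_op T" "q \<in> neg_op T"
  thus "p + q \<in> neg_op T"
    using csubspace_add[OF T, of "(fst p, - snd p)" "(fst q, - snd q)"]
    by (cases p, cases q) (simp add: neg_op_iff)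
next
  fix c p assume "p \<in> neg_op T"
  thus "c *\<^sub>C p \<in> neg_op T"
    using csubspace_scaleC[OF T, of "(fst p, - snd p)" c]
    by (cases p) (simp add: neg_op_iff scaleC_minus_right)
qed

lemma closed_neg_op:
  assumes "closed (T::('a::real_normed_vector \<times> 'b::real_normed_vector) set)"
  shows "closed (neg_op T)"
proof -
  have e: "neg_op T = (\<lambda>p. (fst p, - snd p)) -` T"
    by (auto simp: neg_op_iff)
  have "continuous (at x) (\<lambda>p::'a \<times> 'b. (fst p, - snd p))" for x
    by (intro continuous_intros)
  from continuous_closed_vimage[OF assms this] show ?thesis unfolding e .
qed

lemma clinear_neg_op:
  assumes T: "clinear_op T"
  shows "clinear_op (neg_op T)"
proof (rule csubspace_clinear[OF csubspace_neg_op[OF clinear_op_csubspace[OF T]]])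
  fix y assume "(0, y) \<in> neg_op T"
  hence "(0, - y) \<in> T" by (simp add: neg_op_iff)
  hence "- y = 0" by (rule op_single[OF T])
  thus "y = 0" by simp
qed

lemma double_adjoint:
  fixes T :: "('a::chilbert_space \<times> 'b::chilbert_space) set"
  assumes T: "csubspace T" "closed T"
    and h: "\<forall>y z. (y, z) \<in> adjoint T \<longrightarrow> cinner z x = cinner y w"
  shows "(x, w) \<in> T"
proof -
  obtain g where g: "g \<in> T" "\<forall>p\<in>T. cinner p ((x, w) - g) = 0"
    using projection_exists[OF T, of "(x, w)"] by blast
  define q where "q = (x, w) - g"
  have "(snd q, - fst q) \<in> adjoint T"
    unfolding adjoint_iff
  proof (intro allI impI)
    fix p p' assume "(p, p') \<in> T"
    hence "cinner (p, p') q = 0" using g(2) q_def by blast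
    hence "cinner p (fst q) + cinner p' (snd q) = 0" by (cases q) simp
    thus "cinner p' (snd q) = cinner p (- fst q)" by (simp add: cinner_minus_right add_eq_0_iff)
  qed
  hence "cinner (- fst q) x = cinner (snd q) w" using h by blast
  hence e1: "cinner q (x, w) = 0" by (cases q) (simp add: cinner_minus_left add_eq_0_iff)
  have "cinner g q = 0" using g q_def by simp
  hence e2: "cinner q g = 0" by (subst cinner_commute) simp
  have "cinner q q = cinner q (x, w) - cinner q g"
    unfolding q_def by (simp only: cinner_diff_right)
  hence "cinner q q = 0" using e1 e2 by simp
  hence "q = 0" by (simp only: cinner_self_eq_0)
  thus ?thesis using g(1) unfolding q_def by simp
qed


lemma fst_scaleC [simp]: "fst (c *\<^sub>C p) = c *\<^sub>C fst p" by (simp add: scaleC_prod_def)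
lemma snd_scaleC [simp]: "snd (c *\<^sub>C p) = c *\<^sub>C snd p" by (simp add: scaleC_prod_def)

lemma norm_fst: "norm (fst p) \<le> norm p" by (cases p) (simp add: norm_fst_le)
lemma norm_snd: "norm (snd p) \<le> norm p" by (cases p) (simp add: norm_snd_le)
lemma norm_sq_pair: "(norm p)\<^sup>2 = (norm (fst p))\<^sup>2 + (norm (snd p))\<^sup>2" by (cases p) (simp add: norm_Pair_sq)

lemma cinner_pair: "cinner p q = cinner (fst p) (fst q) + cinner (snd p) (snd q)"
  by (simp add: cinner_prod_def)

lemma pair_bound:
  fixes v u :: "'a::real_normed_vector \<times> 'b::real_normed_vector"
  assumes "0 \<le> K1" "0 \<le> K2"
  shows "norm (fst v) * (K1 * norm (fst u)) + norm (snd v) * (K2 * norm (snd u)) \<le> (K1 + K2) * norm v * norm u"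
proof -
  have "norm (fst v) * (K1 * norm (fst u)) \<le> norm v * (K1 * norm u)"
    by (intro mult_mono norm_fst mult_left_mono) (use assms in auto)
  moreover have "norm (snd v) * (K2 * norm (snd u)) \<le> norm v * (K2 * norm u)"
    by (intro mult_mono norm_snd mult_left_mono) (use assms in auto)
  ultimately show ?thesis by (simp add: algebra_simps)
qed

context
  fixes f :: "'a::complex_inner \<Rightarrow> 'b::complex_inner"
  assumes f: "bounded_clinear_op f"
begin
lemma bcl_add: "f (x + y) = f x + f y" using f by (simp add: bounded_clinear_op_def clinear_on_def)
lemma bcl_scale: "f (c *\<^sub>C x) = c *\<^sub>C f x" using f by (simp add: bounded_clinear_op_def clinear_on_def)
lemma bcl_zero: "f 0 = 0" using bcl_add[of 0 0] by simp
lemma bcl_minus: "f (- x) = - f x" using bcl_scale[of "-1" x] by (simp add: scaleC_minus1)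
lemma bcl_diff: "f (x - y) = f x - f y" using bcl_add[of x "-y"] bcl_minus[of y] by simp
lemma bcl_bound: "\<exists>K\<ge>0. \<forall>x. norm (f x) \<le> K * norm x"
proof -
  obtain K where K: "\<forall>x. norm (f x) \<le> norm x * K" using f by (auto simp: bounded_clinear_op_def)
  have "norm (f x) \<le> \<bar>K\<bar> * norm x" for x
    using K[rule_format, of x] by (metis abs_ge_self mult.commute mult_left_mono norm_ge_zero order_trans)
  thus ?thesis by (intro exI[of _ "\<bar>K\<bar>"]) auto
qed
end

lemma coercive_bound:
  assumes "coercive f"
  shows "\<exists>\<mu>>0. \<forall>x. \<mu> * (norm x)\<^sup>2 \<le> Re (cinner x (f x))"
proof -
  obtain \<mu> where "\<mu> > 0" "\<forall>x. Re (cinner (f x) x) \<ge> \<mu> * (norm x)\<^sup>2" using assms by (auto simp: coercive_def)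
  moreover have "Re (cinner (f x) x) = Re (cinner x (f x))" for x by (subst cinner_commute) simp
  ultimately show ?thesis by auto
qed

locale dtn_setting =
  fixes G :: "('h0::chilbert_space \<times> 'h1::chilbert_space) set"
    and D :: "('h1 \<times> 'h0) set"
    and a :: "'h1 \<Rightarrow> 'h1"
    and m :: "'h0 \<Rightarrow> 'h0"
  assumes G: "dd_closed_op G"
    and D: "dd_closed_op D"
    and GD: "neg_op (adjoint G) \<subseteq> D"
    and a_bd: "bounded_clinear_op a" and a_co: "coercive a"
    and m_bd: "bounded_clinear_op m" and m_co: "coercive m"
begin

lemma G_lin: "clinear_op G" using G by (simp add: dd_closed_op_def)
lemma D_lin: "clinear_op D" using D by (simp add: dd_closed_op_def)
lemma G_cs: "csubspace G" by (rule clinear_op_csubspace[OF G_lin])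
lemma D_cs: "csubspace D" by (rule clinear_op_csubspace[OF D_lin])
lemma G_cl: "closed G" using G by (simp add: dd_closed_op_def)
lemma D_cl: "closed D" using D by (simp add: dd_closed_op_def)

lemma D0_sub: "Dring G \<subseteq> D" using GD by (simp add: Dring_def)
lemma G0_lin: "clinear_op (Gring D)"
  unfolding Gring_def using D by (intro clinear_neg_op adjoint_clinear) (simp add: dd_closed_op_def)
lemma D0_lin: "clinear_op (Dring G)"
  unfolding Dring_def using G by (intro clinear_neg_op adjoint_clinear) (simp add: dd_closed_op_def)
lemma G0_cs: "csubspace (Gring D)" by (rule clinear_op_csubspace[OF G0_lin])
lemma D0_cs: "csubspace (Dring G)" by (rule clinear_op_csubspace[OF D0_lin])
lemma G0_cl: "closed (Gring D)" unfolding Gring_def by (intro closed_neg_op closed_adjoint)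
lemma D0_cl: "closed (Dring G)" unfolding Dring_def by (intro closed_neg_op closed_adjoint)

lemma G0_sub: "Gring D \<subseteq> G"
proof
  fix p assume p: "p \<in> Gring D"
  obtain x w where xw: "p = (x, w)" by (cases p)
  have h: "(x, - w) \<in> adjoint D" using p xw by (simp add: Gring_def neg_op_iff)
  have "(x, w) \<in> G"
  proof (rule double_adjoint[OF G_cs G_cl], intro allI impI)
    fix y z assume "(y, z) \<in> adjoint G"
    hence "(y, - z) \<in> D" using GD by (auto simp: neg_op_iff)
    hence "cinner (- z) x = cinner y (- w)" using h by (simp add: adjoint_iff)
    thus "cinner z x = cinner y w" by (simp add: cinner_minus_left cinner_minus_right)
  qed
  thus "p \<in> G" using xw by simp
qed

lemma D_closure:
  assumes "\<And>y z. (y, z) \<in> adjoint D \<Longrightarrow> cinner z x = cinner y w"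
  shows "(x, w) \<in> D"
  by (rule double_adjoint[OF D_cs D_cl]) (use assms in blast)

lemma G_closure:
  assumes "\<And>y z. (y, z) \<in> adjoint G \<Longrightarrow> cinner z x = cinner y w"
  shows "(x, w) \<in> G"
  by (rule double_adjoint[OF G_cs G_cl]) (use assms in blast)

lemma B1:
  assumes "(v, v') \<in> Gring D" "(z, z') \<in> D"
  shows "cinner v z' + cinner v' z = 0"
proof -
  have "(v, - v') \<in> adjoint D" using assms(1) by (simp add: Gring_def neg_op_iff)
  hence "cinner z' v = cinner z (- v')" using assms(2) by (simp add: adjoint_iff)
  hence "cnj (cinner z' v) = cnj (cinner z (- v'))" by simp
  hence "cinner v z' = - cinner v' z"
    using cinner_commute[of v z'] cinner_commute[of "-v'" z] by (simp add: cinner_minus_left)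
  thus ?thesis by simp
qed

lemma B2:
  assumes "(x, x') \<in> G" "(z, z') \<in> Dring G"
  shows "cinner x z' + cinner x' z = 0"
proof -
  have "(z, - z') \<in> adjoint G" using assms(2) by (simp add: Dring_def neg_op_iff)
  hence "cinner x' z = cinner x (- z')" using assms(1) by (simp add: adjoint_iff)
  thus ?thesis by (simp add: cinner_minus_right)
qed

end


context
  fixes T :: "('a::chilbert_space \<times> 'b::chilbert_space) set" and T0 :: "('a \<times> 'b) set"
  assumes T: "clinear_op T" "closed T" and T0: "clinear_op T0" "closed T0" and sub: "T0 \<subseteq> T"
begin

lemma gip_pair: "gip T v u = cinner (v, opapp T v) (u, opapp T u)"
  by (simp add: gip_def)

lemma T0_app: "v \<in> opdom T0 \<Longrightarrow> opapp T v = opapp T0 v"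
  using dom_graph[OF T0(1)] sub opapp_eq[OF T(1)] by blast

lemma BD_graph_iff: "u \<in> BD T T0 \<longleftrightarrow> u \<in> opdom T \<and> (u, opapp T u) \<in> orth T0"
proof
  assume u: "u \<in> BD T T0"
  have "cinner h (u, opapp T u) = 0" if h: "h \<in> T0" for h
  proof -
    obtain v v' where vv: "h = (v, v')" by (cases h)
    have "v \<in> opdom T0" using h vv in_dom[OF T0(1)] by blast
    moreover have "opapp T v = v'" using h vv sub opapp_eq[OF T(1)] by blast
    ultimately show ?thesis using u vv unfolding BD_def by (auto simp: gip_pair)
  qed
  thus "u \<in> opdom T \<and> (u, opapp T u) \<in> orth T0" using u by (auto simp: BD_def orth_def)
next
  assume u: "u \<in> opdom T \<and> (u, opapp T u) \<in> orth T0"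
  have "gip T v u = 0" if v: "v \<in> opdom T0" for v
  proof -
    have "(v, opapp T0 v) \<in> T0" by (rule dom_graph[OF T0(1) v])
    hence "cinner (v, opapp T0 v) (u, opapp T u) = 0" using u unfolding orth_def by blast
    thus ?thesis by (simp add: gip_pair T0_app[OF v])
  qed
  thus "u \<in> BD T T0" using u by (simp add: BD_def)
qed

lemma W_fst: "p \<in> T \<inter> orth T0 \<Longrightarrow> fst p \<in> BD T T0 \<and> snd p = opapp T (fst p)"
proof -
  assume p: "p \<in> T \<inter> orth T0"
  have e: "snd p = opapp T (fst p)" using p opapp_eq[OF T(1), of "fst p" "snd p"] by simp
  have "fst p \<in> opdom T" using p in_dom[OF T(1), of "fst p" "snd p"] by simp
  moreover have "(fst p, opapp T (fst p)) \<in> orth T0" using p e by (metis prod.collapse IntD2)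
  ultimately show ?thesis using BD_graph_iff e by simp
qed

lemma W_cs: "csubspace (T \<inter> orth T0)" by (intro csubspace_Int clinear_op_csubspace T csubspace_orth)
lemma W_cl: "closed (T \<inter> orth T0)" by (intro closed_Int T closed_orth)

lemma gip_add_left: "x \<in> opdom T \<Longrightarrow> y \<in> opdom T \<Longrightarrow> gip T (x + y) z = gip T x z + gip T y z"
  by (simp add: gip_def opapp_add[OF T(1)] cinner_add_left)
lemma gip_diff_left: "x \<in> opdom T \<Longrightarrow> y \<in> opdom T \<Longrightarrow> gip T (x - y) z = gip T x z - gip T y z"
  by (simp add: gip_def opapp_diff[OF T(1)] cinner_diff_left)
lemma gip_self: "gip T x x = 0 \<Longrightarrow> x = 0"
proof -
  assume "gip T x x = 0"
  hence "cinner (x, opapp T x) (x, opapp T x) = 0" by (simp add: gip_pair)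
  hence "(x, opapp T x) = 0" by (simp only: cinner_self_eq_0)
  thus "x = 0" by (simp add: zero_prod_def)
qed

lemma BD_cs: "csubspace (BD T T0)"
  unfolding csubspace_def
proof (intro conjI ballI allI)
  have "(0, 0) \<in> orth T0" using csubspace_0[OF csubspace_orth, of T0, unfolded zero_prod_def] .
  thus "0 \<in> BD T T0" using dom_zero[OF T(1)] opapp_zero[OF T(1)]
    by (simp add: BD_graph_iff)
  fix x y assume "x \<in> BD T T0" "y \<in> BD T T0"
  thus "x + y \<in> BD T T0"
    using csubspace_add[OF csubspace_orth, of "(x, opapp T x)" T0 "(y, opapp T y)"]
    by (simp add: BD_graph_iff dom_add[OF T(1)] opapp_add[OF T(1)])
next
  fix c x assume "x \<in> BD T T0"
  thus "c *\<^sub>C x \<in> BD T T0"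
    using csubspace_scaleC[OF csubspace_orth, of "(x, opapp T x)" T0 c]
    by (simp add: BD_graph_iff dom_scale[OF T(1)] opapp_scale[OF T(1)])
qed

lemma BD_orth: "u \<in> BD T T0 \<Longrightarrow> w \<in> opdom T0 \<Longrightarrow> gip T w u = 0"
  by (simp add: BD_def)

lemma proj_prop:
  assumes y: "y \<in> opdom T"
  shows "projBD T T0 y \<in> BD T T0 \<and> y - projBD T T0 y \<in> opdom T0"
proof -
  define P where "P p \<longleftrightarrow> p \<in> BD T T0 \<and> (\<forall>q\<in>BD T T0. gip T (y - p) q = 0)" for p
  obtain g where g: "g \<in> T \<inter> orth T0" "\<forall>q\<in>T \<inter> orth T0. cinner q ((y, opapp T y) - g) = 0"
    using projection_exists[OF W_cs W_cl, of "(y, opapp T y)"] by blast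
  have g1: "fst g \<in> BD T T0" "snd g = opapp T (fst g)" using W_fst[OF g(1)] by auto
  have gdom: "fst g \<in> opdom T" using g1 by (simp add: BD_def)
  have Pg: "P (fst g)"
    unfolding P_def
  proof (intro conjI ballI g1(1))
    fix q assume q: "q \<in> BD T T0"
    have qW: "(q, opapp T q) \<in> T \<inter> orth T0" using q BD_graph_iff dom_graph[OF T(1)] by auto
    have "cinner (q, opapp T q) ((y, opapp T y) - g) = 0" using g(2) qW by blast
    hence "cinner ((y, opapp T y) - g) (q, opapp T q) = 0" by (subst cinner_commute) simp
    moreover have "(y, opapp T y) - g = (y - fst g, opapp T (y - fst g))"
      using g1(2) opapp_diff[OF T(1) y gdom] by (cases g) simp
    ultimately show "gip T (y - fst g) q = 0" by (simp add: gip_pair)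
  qed
  have uniq: "p = p'" if "P p" "P p'" for p p'
  proof -
    have pd: "p \<in> opdom T" "p' \<in> opdom T" "p' - p \<in> BD T T0"
      using that csubspace_diff[OF BD_cs] by (auto simp: P_def BD_def)
    have "gip T (y - p) (p' - p) = 0" "gip T (y - p') (p' - p) = 0" using that pd(3) by (auto simp: P_def)
    moreover have "gip T (y - p) (p' - p) - gip T (y - p') (p' - p) = gip T (p' - p) (p' - p)"
      using gip_diff_left[of "y - p" "y - p'" "p' - p"] dom_diff[OF T(1)] y pd by simp
    ultimately have "gip T (p' - p) (p' - p) = 0" by simp
    hence "p' - p = 0" by (rule gip_self)
    thus ?thesis by simp
  qed
  have "projBD T T0 y = fst g"
    unfolding projBD_def using Pg uniq unfolding P_def by (intro the_equality) blast+
  hence Pp: "P (projBD T T0 y)" using Pg by simp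
  define z where "z = y - projBD T T0 y"
  have zdom: "z \<in> opdom T" unfolding z_def using Pp y dom_diff[OF T(1)] by (auto simp: P_def BD_def)
  obtain h where h: "h \<in> T0" "\<forall>p\<in>T0. cinner p ((z, opapp T z) - h) = 0"
    using projection_exists[OF clinear_op_csubspace[OF T0(1)] T0(2), of "(z, opapp T z)"] by blast
  define r where "r = (z, opapp T z) - h"
  have rT: "r \<in> T" unfolding r_def using dom_graph[OF T(1) zdom] h(1) sub csubspace_diff[OF clinear_op_csubspace[OF T(1)]] by blast
  have rW: "r \<in> T \<inter> orth T0" using rT h(2) by (simp add: orth_def r_def)
  have r1: "fst r \<in> BD T T0" "snd r = opapp T (fst r)" using W_fst[OF rW] by auto
  have "gip T z (fst r) = 0" using Pp r1(1) by (simp add: P_def z_def)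
  hence "cinner (z, opapp T z) r = 0" using r1(2) by (cases r) (simp add: gip_pair)
  hence e1: "cinner r (z, opapp T z) = 0" by (subst cinner_commute) simp
  have "cinner h r = 0" using h by (simp add: r_def)
  hence e2: "cinner r h = 0" by (subst cinner_commute) simp
  have "cinner r r = cinner r (z, opapp T z) - cinner r h" unfolding r_def by (simp only: cinner_diff_right)
  hence "cinner r r = 0" using e1 e2 by simp
  hence "r = 0" by (simp only: cinner_self_eq_0)
  hence "(z, opapp T z) \<in> T0" using h(1) by (simp add: r_def)
  hence "z \<in> opdom T0" using in_dom[OF T0(1)] by blast
  thus ?thesis using Pp by (simp add: P_def z_def)
qed

end


context dtn_setting begin

definition solP :: "'h0 \<Rightarrow> 'h0 \<Rightarrow> bool" where
  "solP u0 u \<longleftrightarrow> u \<in> opdom G \<and> a (opapp G u) \<in> opdom D \<and> m u - opapp D (a (opapp G u)) = 0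
     \<and> u - u0 \<in> opdom (Gring D)"

lemma solP_D: "solP u0 u \<Longrightarrow> (a (opapp G u), m u) \<in> D"
  using dom_graph[OF D_lin, of "a (opapp G u)"] by (auto simp: solP_def)

lemma sol_weak:
  assumes "solP u0 u" "(v, v') \<in> Gring D"
  shows "cinner v (m u) + cinner v' (a (opapp G u)) = 0"
  using B1[OF assms(2) solP_D[OF assms(1)]] .

lemma m_props: "\<exists>K\<ge>0. \<forall>x. norm (m x) \<le> K * norm x" "\<exists>\<mu>>0. \<forall>x. \<mu> * (norm x)\<^sup>2 \<le> Re (cinner x (m x))"
  using bcl_bound[OF m_bd] coercive_bound[OF m_co] by auto
lemma a_props: "\<exists>K\<ge>0. \<forall>x. norm (a x) \<le> K * norm x" "\<exists>\<mu>>0. \<forall>x. \<mu> * (norm x)\<^sup>2 \<le> Re (cinner x (a x))"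
  using bcl_bound[OF a_bd] coercive_bound[OF a_co] by auto

lemma pair_coercive:
  "\<exists>\<mu>>0. \<forall>x y. \<mu> * (norm (x, y))\<^sup>2 \<le> Re (cinner x (m x)) + Re (cinner y (a y))"
proof -
  obtain \<mu>1 where m1: "\<mu>1 > 0" "\<forall>x. \<mu>1 * (norm x)\<^sup>2 \<le> Re (cinner x (m x))" using m_props by blast
  obtain \<mu>2 where a1: "\<mu>2 > 0" "\<forall>x. \<mu>2 * (norm x)\<^sup>2 \<le> Re (cinner x (a x))" using a_props by blast
  have "min \<mu>1 \<mu>2 * (norm (x, y))\<^sup>2 \<le> Re (cinner x (m x)) + Re (cinner y (a y))" for x y
  proof -
    have "min \<mu>1 \<mu>2 * (norm (x, y))\<^sup>2 = min \<mu>1 \<mu>2 * (norm x)\<^sup>2 + min \<mu>1 \<mu>2 * (norm y)\<^sup>2"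
      by (simp add: norm_Pair_sq algebra_simps)
    also have "\<dots> \<le> \<mu>1 * (norm x)\<^sup>2 + \<mu>2 * (norm y)\<^sup>2"
      by (intro add_mono mult_right_mono) auto
    also have "\<dots> \<le> Re (cinner x (m x)) + Re (cinner y (a y))" using m1 a1 by (intro add_mono) auto
    finally show ?thesis .
  qed
  thus ?thesis using m1 a1 by (intro exI[of _ "min \<mu>1 \<mu>2"]) auto
qed

lemma pair_bounded:
  "\<exists>M\<ge>0. \<forall>p q::'h0 \<times> 'h1. cmod (cinner (fst p) (m (fst q)) + cinner (snd p) (a (snd q))) \<le> M * norm p * norm q"
proof -
  obtain K1 where K1: "K1 \<ge> 0" "\<forall>x. norm (m x) \<le> K1 * norm x" using m_props by blast
  obtain K2 where K2: "K2 \<ge> 0" "\<forall>x. norm (a x) \<le> K2 * norm x" using a_props by blast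
  have "cmod (cinner (fst p) (m (fst q)) + cinner (snd p) (a (snd q))) \<le> (K1 + K2) * norm p * norm q"
    for p q :: "'h0 \<times> 'h1"
  proof -
    have "cmod (cinner (fst p) (m (fst q)) + cinner (snd p) (a (snd q)))
        \<le> cmod (cinner (fst p) (m (fst q))) + cmod (cinner (snd p) (a (snd q)))" by (rule norm_triangle_ineq)
    also have "\<dots> \<le> norm (fst p) * norm (m (fst q)) + norm (snd p) * norm (a (snd q))"
      by (intro add_mono cinner_Cauchy_Schwarz)
    also have "\<dots> \<le> norm (fst p) * (K1 * norm (fst q)) + norm (snd p) * (K2 * norm (snd q))"
      using K1 K2 by (intro add_mono mult_left_mono) auto
    also have "\<dots> \<le> (K1 + K2) * norm p * norm q" by (rule pair_bound) (use K1 K2 in auto)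
    finally show ?thesis .
  qed
  thus ?thesis using K1 K2 by (intro exI[of _ "K1 + K2"]) auto
qed

lemma sol_exists:
  assumes u0: "u0 \<in> opdom G"
  shows "\<exists>u. solP u0 u"
proof -
  define s where "s p q = cinner (fst p) (m (fst q)) + cinner (snd p) (a (snd q))" for p q :: "'h0 \<times> 'h1"
  define F where "F p = - (cinner (fst p) (m u0) + cinner (snd p) (a (opapp G u0)))" for p :: "'h0 \<times> 'h1"
  obtain M where M: "M \<ge> 0" "\<forall>p q. cmod (s p q) \<le> M * norm p * norm q" using pair_bounded unfolding s_def by blast
  obtain \<mu> where mu: "\<mu> > 0" "\<forall>x y. \<mu> * (norm (x, y))\<^sup>2 \<le> Re (cinner x (m x)) + Re (cinner y (a y))"
    using pair_coercive by blast
  have Fb: "cmod (F p) \<le> (norm u0 * M + norm (opapp G u0) * M) * norm p" for p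
  proof -
    have "cmod (F p) = cmod (- s p (u0, opapp G u0))" by (simp add: F_def s_def)
    also have "\<dots> = cmod (s p (u0, opapp G u0))" by (rule norm_minus_cancel)
    also have "\<dots> \<le> M * norm p * norm (u0, opapp G u0)" using M by blast
    also have "norm (u0, opapp G u0) \<le> norm u0 + norm (opapp G u0)" by (simp add: norm_prod_def sqrt_sum_squares_le_sum)
    hence "M * norm p * norm (u0, opapp G u0) \<le> M * norm p * (norm u0 + norm (opapp G u0))"
      using M by (intro mult_left_mono) auto
    finally show ?thesis by (simp add: algebra_simps)
  qed
  have "\<exists>w\<in>Gring D. \<forall>v\<in>Gring D. s v w = F v"
  proof (rule lax_milgram[OF G0_cs G0_cl, where M=M and \<mu>=\<mu>])
    show "\<forall>v\<in>Gring D. \<forall>v'\<in>Gring D. \<forall>u\<in>Gring D. s (v + v') u = s v u + s v' u"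
      by (simp add: s_def cinner_add_left)
    show "\<forall>c. \<forall>v\<in>Gring D. \<forall>u\<in>Gring D. s (c *\<^sub>C v) u = cnj c * s v u"
      by (simp add: s_def cinner_scaleC_left algebra_simps)
    show "\<forall>v\<in>Gring D. \<forall>u\<in>Gring D. \<forall>u'\<in>Gring D. s v (u + u') = s v u + s v u'"
      by (simp add: s_def cinner_add_right bcl_add[OF m_bd] bcl_add[OF a_bd])
    show "\<forall>c. \<forall>v\<in>Gring D. \<forall>u\<in>Gring D. s v (c *\<^sub>C u) = c * s v u"
      by (simp add: s_def cinner_scaleC_right bcl_scale[OF m_bd] bcl_scale[OF a_bd] algebra_simps)
    show "\<forall>v\<in>Gring D. \<forall>u\<in>Gring D. cmod (s v u) \<le> M * norm v * norm u" using M by blast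
    show "0 \<le> M" by (rule M(1))
    show "0 < \<mu>" by (rule mu(1))
    show "\<forall>u\<in>Gring D. \<mu> * (norm u)\<^sup>2 \<le> Re (s u u)"
      using mu(2) by (auto simp: s_def)
    show "\<forall>x\<in>Gring D. \<forall>y\<in>Gring D. F (x + y) = F x + F y"
      by (simp add: F_def cinner_add_left)
    show "\<forall>c. \<forall>x\<in>Gring D. F (c *\<^sub>C x) = cnj c * F x"
      by (simp add: F_def cinner_scaleC_left algebra_simps)
    show "\<forall>x\<in>Gring D. cmod (F x) \<le> (norm u0 * M + norm (opapp G u0) * M) * norm x"
      using Fb by blast
  qed
  then obtain w where w: "w \<in> Gring D" "\<forall>v\<in>Gring D. s v w = F v" by blast
  define u where "u = u0 + fst w"
  have wG: "(fst w, snd w) \<in> G" using w(1) G0_sub by auto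
  have uG: "(u, opapp G u0 + snd w) \<in> G"
    unfolding u_def using op_add[OF G_lin dom_graph[OF G_lin u0] wG] .
  hence Gu: "opapp G u = opapp G u0 + snd w" using opapp_eq[OF G_lin] by blast
  have weak: "cinner v (m u) + cinner v' (a (opapp G u)) = 0" if vv: "(v, v') \<in> Gring D" for v v'
  proof -
    have "s (v, v') w = F (v, v')" using w(2) vv by blast
    thus ?thesis unfolding Gu
      by (simp add: s_def F_def u_def bcl_add[OF m_bd] bcl_add[OF a_bd] cinner_add_right algebra_simps)
  qed
  have inD: "(a (opapp G u), m u) \<in> D"
  proof (rule D_closure)
    fix y z assume "(y, z) \<in> adjoint D"
    hence "(y, - z) \<in> Gring D" by (simp add: Gring_def neg_op_iff)
    from weak[OF this] show "cinner z (a (opapp G u)) = cinner y (m u)"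
      by (simp add: cinner_minus_left add_eq_0_iff)
  qed
  have "solP u0 u"
    unfolding solP_def
  proof (intro conjI)
    show "u \<in> opdom G" using in_dom[OF G_lin uG] .
    show "a (opapp G u) \<in> opdom D" using in_dom[OF D_lin inD] .
    show "m u - opapp D (a (opapp G u)) = 0" using opapp_eq[OF D_lin inD] by simp
    show "u - u0 \<in> opdom (Gring D)" using in_dom[OF G0_lin, of "fst w" "snd w"] w(1) by (simp add: u_def)
  qed
  thus ?thesis by blast
qed

lemma sol_unique:
  assumes "solP u0 u1" "solP u0 u2"
  shows "u1 = u2"
proof -
  have d: "u1 - u2 \<in> opdom (Gring D)"
    using dom_diff[OF G0_lin, of "u1 - u0" "u2 - u0"] assms by (simp add: solP_def)
  define w where "w = u1 - u2"
  define w' where "w' = opapp (Gring D) w"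
  have ww: "(w, w') \<in> Gring D" using dom_graph[OF G0_lin d] by (simp add: w_def w'_def)
  have "(w, w') \<in> G" using ww G0_sub by blast
  hence w'G: "w' = opapp G u1 - opapp G u2"
    using opapp_eq[OF G_lin] opapp_diff[OF G_lin, of u1 u2] assms by (auto simp: solP_def w_def)
  have "cinner w (m u1) + cinner w' (a (opapp G u1)) = 0" by (rule sol_weak[OF assms(1) ww])
  moreover have "cinner w (m u2) + cinner w' (a (opapp G u2)) = 0" by (rule sol_weak[OF assms(2) ww])
  ultimately have "cinner w (m w) + cinner w' (a w') = 0"
    by (simp add: w_def w'G bcl_diff[OF m_bd] bcl_diff[OF a_bd] cinner_diff_right algebra_simps)
      (simp add: add_eq_0_iff)
  moreover obtain \<mu> where mu: "\<mu> > 0" "\<forall>x y. \<mu> * (norm (x, y))\<^sup>2 \<le> Re (cinner x (m x)) + Re (cinner y (a y))"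
    using pair_coercive by blast
  ultimately have "\<mu> * (norm (w, w'))\<^sup>2 \<le> 0" by (metis plus_complex.simps(1) zero_complex.simps(1))
  hence "(w, w') = 0" using mu(1) by (simp add: mult_le_0_iff)
  thus ?thesis by (simp add: w_def zero_prod_def)
qed

abbreviation "sol \<equiv> dtn_sol G D a m"

lemma solP_sol: "u0 \<in> opdom G \<Longrightarrow> solP u0 (sol u0)"
proof -
  assume u0: "u0 \<in> opdom G"
  have eq: "sol u0 = (THE u. solP u0 u)" unfolding dtn_sol_def solP_def ..
  obtain u where "solP u0 u" using sol_exists[OF u0] by blast
  hence "\<exists>!u. solP u0 u" using sol_unique by blast
  thus ?thesis unfolding eq by (rule theI')
qed

end


lemma gnorm_eq: "gnorm T u = norm (u, opapp T u)"
  by (simp add: gnorm_def gip_def norm_prod_def cinner_self_Re)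

context dtn_setting begin

lemma sol_dom: "u0 \<in> opdom G \<Longrightarrow> sol u0 \<in> opdom G"
  using solP_sol by (simp add: solP_def)

lemma sol_diff_dom: "u0 \<in> opdom G \<Longrightarrow> sol u0 - u0 \<in> opdom (Gring D)"
  using solP_sol by (simp add: solP_def)

lemma sol_aG_dom: "u0 \<in> opdom G \<Longrightarrow> a (opapp G (sol u0)) \<in> opdom D"
  using solP_sol by (simp add: solP_def)

lemma sol_D: "u0 \<in> opdom G \<Longrightarrow> opapp D (a (opapp G (sol u0))) = m (sol u0)"
  using solP_sol by (simp add: solP_def)

lemma G0_app: "v \<in> opdom (Gring D) \<Longrightarrow> opapp G v = opapp (Gring D) v"
  using T0_app[OF G_lin G_cl G0_lin G0_cl G0_sub] .

lemma D0_app: "v \<in> opdom (Dring G) \<Longrightarrow> opapp D v = opapp (Dring G) v"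
  using T0_app[OF D_lin D_cl D0_lin D0_cl D0_sub] .

lemma G0_dom_sub: "v \<in> opdom (Gring D) \<Longrightarrow> v \<in> opdom G"
  using G0_sub by (auto simp: opdom_def)

lemma sol_add:
  assumes "u0 \<in> opdom G" "u1 \<in> opdom G"
  shows "sol (u0 + u1) = sol u0 + sol u1"
proof (rule sol_unique[OF solP_sol[OF dom_add[OF G_lin assms]]])
  let ?s0 = "sol u0" and ?s1 = "sol u1"
  have d: "?s0 \<in> opdom G" "?s1 \<in> opdom G" using sol_dom assms by auto
  have Gs: "opapp G (?s0 + ?s1) = opapp G ?s0 + opapp G ?s1" using opapp_add[OF G_lin d] .
  have ad: "a (opapp G ?s0) \<in> opdom D" "a (opapp G ?s1) \<in> opdom D" using sol_aG_dom assms by auto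
  show "solP (u0 + u1) (?s0 + ?s1)"
    unfolding solP_def
  proof (intro conjI)
    show "?s0 + ?s1 \<in> opdom G" using dom_add[OF G_lin d] .
    show "a (opapp G (?s0 + ?s1)) \<in> opdom D"
      using dom_add[OF D_lin ad] by (simp add: Gs bcl_add[OF a_bd])
    show "m (?s0 + ?s1) - opapp D (a (opapp G (?s0 + ?s1))) = 0"
      using opapp_add[OF D_lin ad] sol_D assms by (simp add: Gs bcl_add[OF a_bd] bcl_add[OF m_bd])
    have e: "?s0 + ?s1 - (u0 + u1) = (?s0 - u0) + (?s1 - u1)" by simp
    show "?s0 + ?s1 - (u0 + u1) \<in> opdom (Gring D)"
      unfolding e by (rule dom_add[OF G0_lin sol_diff_dom[OF assms(1)] sol_diff_dom[OF assms(2)]])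
  qed
qed

lemma sol_scale:
  assumes "u0 \<in> opdom G"
  shows "sol (c *\<^sub>C u0) = c *\<^sub>C sol u0"
proof (rule sol_unique[OF solP_sol[OF dom_scale[OF G_lin assms]]])
  let ?s0 = "sol u0"
  have d: "?s0 \<in> opdom G" using sol_dom assms by auto
  have Gs: "opapp G (c *\<^sub>C ?s0) = c *\<^sub>C opapp G ?s0" using opapp_scale[OF G_lin d] .
  have ad: "a (opapp G ?s0) \<in> opdom D" using sol_aG_dom assms by auto
  show "solP (c *\<^sub>C u0) (c *\<^sub>C ?s0)"
    unfolding solP_def
  proof (intro conjI)
    show "c *\<^sub>C ?s0 \<in> opdom G" using dom_scale[OF G_lin d] .
    show "a (opapp G (c *\<^sub>C ?s0)) \<in> opdom D"
      using dom_scale[OF D_lin ad] by (simp add: Gs bcl_scale[OF a_bd])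
    show "m (c *\<^sub>C ?s0) - opapp D (a (opapp G (c *\<^sub>C ?s0))) = 0"
      using opapp_scale[OF D_lin ad] sol_D assms by (simp add: Gs bcl_scale[OF a_bd] bcl_scale[OF m_bd])
    have "c *\<^sub>C ?s0 - c *\<^sub>C u0 = c *\<^sub>C (?s0 - u0)" by (simp add: scaleC_diff_right)
    thus "c *\<^sub>C ?s0 - c *\<^sub>C u0 \<in> opdom (Gring D)"
      using dom_scale[OF G0_lin sol_diff_dom[OF assms]] by simp
  qed
qed

lemma sol_zero: "sol 0 = 0"
  using sol_scale[OF dom_zero[OF G_lin], of 0] by simp

abbreviation "Lam \<equiv> dtn_Lambda G D a m"

lemma Lam_prop:
  assumes "u0 \<in> opdom G"
  shows "Lam u0 \<in> BDD G D \<and> a (opapp G (sol u0)) - Lam u0 \<in> opdom (Dring G)"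
  unfolding dtn_Lambda_def BDD_def
  by (rule proj_prop[OF D_lin D_cl D0_lin D0_cl D0_sub sol_aG_dom[OF assms]])

definition aform :: "'h0 \<Rightarrow> 'h0 \<Rightarrow> complex" where
  "aform v0 u0 = cinner v0 (m (sol u0)) + cinner (opapp G v0) (a (opapp G (sol u0)))"

lemma BDG_dom: "u \<in> BDG G D \<Longrightarrow> u \<in> opdom G" by (simp add: BDG_def BD_def)
lemma BDD_dom: "u \<in> BDD G D \<Longrightarrow> u \<in> opdom D" by (simp add: BDD_def BD_def)

lemma A2:
  assumes v0: "v0 \<in> opdom G" and u0: "u0 \<in> opdom G"
  shows "cinner v0 (opapp D (Lam u0)) + cinner (opapp G v0) (Lam u0) = aform v0 u0"
proof -
  define y where "y = a (opapp G (sol u0))"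
  define L where "L = Lam u0"
  have L: "L \<in> opdom D" "y - L \<in> opdom (Dring G)" using Lam_prop[OF u0] BDD_dom by (auto simp: y_def L_def)
  have y: "y \<in> opdom D" using sol_aG_dom[OF u0] by (simp add: y_def)
  have "(y - L, opapp (Dring G) (y - L)) \<in> Dring G" using dom_graph[OF D0_lin L(2)] .
  moreover have "opapp (Dring G) (y - L) = opapp D y - opapp D L"
    using D0_app[OF L(2)] opapp_diff[OF D_lin y L(1)] by simp
  ultimately have "cinner v0 (opapp D y - opapp D L) + cinner (opapp G v0) (y - L) = 0"
    using B2[OF dom_graph[OF G_lin v0]] by simp
  hence "cinner v0 (opapp D L) + cinner (opapp G v0) L = cinner v0 (opapp D y) + cinner (opapp G v0) y"
    by (simp add: cinner_diff_right algebra_simps)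
  thus ?thesis using sol_D[OF u0] by (simp add: aform_def y_def L_def)
qed

lemma A1:
  assumes v0: "v0 \<in> opdom G" and u0: "u0 \<in> opdom G" and v: "v \<in> opdom G" "v - v0 \<in> opdom (Gring D)"
  shows "aform v0 u0 = cinner v (m (sol u0)) + cinner (opapp G v) (a (opapp G (sol u0)))"
proof -
  have "(v - v0, opapp (Gring D) (v - v0)) \<in> Gring D" using dom_graph[OF G0_lin v(2)] .
  moreover have "opapp (Gring D) (v - v0) = opapp G v - opapp G v0"
    using G0_app[OF v(2)] opapp_diff[OF G_lin v(1) v0] by simp
  ultimately have "cinner (v - v0) (m (sol u0)) + cinner (opapp G v - opapp G v0) (a (opapp G (sol u0))) = 0"
    using sol_weak[OF solP_sol[OF u0]] by simp
  thus ?thesis by (simp add: aform_def cinner_diff_left algebra_simps)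
qed

lemma U1:
  assumes u: "u \<in> BDG G D"
  shows "(opapp G u, u) \<in> D"
proof (rule D_closure)
  fix y z assume "(y, z) \<in> adjoint D"
  hence yz: "(y, - z) \<in> Gring D" by (simp add: Gring_def neg_op_iff)
  hence yd: "y \<in> opdom (Gring D)" using in_dom[OF G0_lin] by blast
  have "opapp G y = - z" using yz G0_sub opapp_eq[OF G_lin] by blast
  moreover have "gip G y u = 0" using u yd by (simp add: BDG_def BD_def)
  ultimately have "cinner y u - cinner z (opapp G u) = 0" by (simp add: gip_def cinner_minus_left)
  thus "cinner z (opapp G u) = cinner y u" by simp
qed

lemma U2:
  assumes y: "y \<in> BDD G D"
  shows "(opapp D y, y) \<in> G"
proof (rule G_closure)
  fix p q assume "(p, q) \<in> adjoint G"
  hence pq: "(p, - q) \<in> Dring G" by (simp add: Dring_def neg_op_iff)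
  hence pd: "p \<in> opdom (Dring G)" using in_dom[OF D0_lin] by blast
  have "opapp D p = - q" using pq D0_sub opapp_eq[OF D_lin] by blast
  moreover have "gip D p y = 0" using y pd by (simp add: BDD_def BD_def)
  ultimately have "cinner p y - cinner q (opapp D y) = 0" by (simp add: gip_def cinner_minus_left)
  thus "cinner q (opapp D y) = cinner p y" by simp
qed

lemma U4:
  assumes y: "y \<in> BDD G D"
  shows "opapp D y \<in> BDG G D \<and> opapp G (opapp D y) = y"
proof -
  have yG: "(opapp D y, y) \<in> G" by (rule U2[OF y])
  have Gy: "opapp G (opapp D y) = y" using opapp_eq[OF G_lin yG] .
  have yD: "(y, opapp D y) \<in> D" using dom_graph[OF D_lin BDD_dom[OF y]] .
  have "gip G v (opapp D y) = 0" if v: "v \<in> opdom (Gring D)" for v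
  proof -
    have "cinner v (opapp D y) + cinner (opapp (Gring D) v) y = 0"
      using B1[OF dom_graph[OF G0_lin v] yD] .
    thus ?thesis by (simp add: gip_def Gy G0_app[OF v])
  qed
  thus ?thesis using in_dom[OF G_lin yG] Gy by (simp add: BDG_def BD_def)
qed

end


context dtn_setting begin

lemma aform_sol:
  assumes u0: "u0 \<in> opdom G"
  shows "aform u0 u0 = cinner (sol u0) (m (sol u0)) + cinner (opapp G (sol u0)) (a (opapp G (sol u0)))"
  using A1[OF u0 u0 sol_dom[OF u0] sol_diff_dom[OF u0]] .

lemma sol_norm_ge:
  assumes u0: "u0 \<in> BDG G D"
  shows "(norm (u0, opapp G u0))\<^sup>2 \<le> (norm (sol u0, opapp G (sol u0)))\<^sup>2"
proof -
  have d0: "u0 \<in> opdom G" using BDG_dom[OF u0] .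
  define w where "w = sol u0 - u0"
  have wd: "w \<in> opdom (Gring D)" using sol_diff_dom[OF d0] by (simp add: w_def)
  have Gw: "opapp G w = opapp G (sol u0) - opapp G u0"
    unfolding w_def using opapp_diff[OF G_lin sol_dom[OF d0] d0] .
  have "gip G w u0 = 0" using BD_orth[of G "Gring D" u0 w] u0 wd by (simp add: BDG_def BD_def)
  hence "cinner (w, opapp G w) (u0, opapp G u0) = 0" by (simp add: gip_def)
  hence o: "cinner (u0, opapp G u0) (w, opapp G w) = 0" by (subst cinner_commute) simp
  have "(sol u0, opapp G (sol u0)) = (u0, opapp G u0) + (w, opapp G w)" unfolding Gw by (simp add: w_def)
  hence "(norm (sol u0, opapp G (sol u0)))\<^sup>2 = (norm ((u0, opapp G u0) + (w, opapp G w)))\<^sup>2"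
    by (simp only:)
  also have "\<dots> = (norm (u0, opapp G u0))\<^sup>2 + (norm (w, opapp G w))\<^sup>2"
    by (rule pythag[OF o])
  finally have "(norm (sol u0, opapp G (sol u0)))\<^sup>2 = (norm (u0, opapp G u0))\<^sup>2 + (norm (w, opapp G w))\<^sup>2" .
  thus ?thesis by simp
qed

lemma aform_coer:
  "\<exists>\<mu>>0. \<forall>u0\<in>BDG G D. \<mu> * (norm (sol u0, opapp G (sol u0)))\<^sup>2 \<le> Re (aform u0 u0)
       \<and> \<mu> * (norm (u0, opapp G u0))\<^sup>2 \<le> Re (aform u0 u0)"
proof -
  obtain \<mu> where mu: "\<mu> > 0" "\<forall>x y. \<mu> * (norm (x, y))\<^sup>2 \<le> Re (cinner x (m x)) + Re (cinner y (a y))"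
    using pair_coercive by blast
  have "\<mu> * (norm (sol u0, opapp G (sol u0)))\<^sup>2 \<le> Re (aform u0 u0)
       \<and> \<mu> * (norm (u0, opapp G u0))\<^sup>2 \<le> Re (aform u0 u0)" if u0: "u0 \<in> BDG G D" for u0
  proof -
    have 1: "\<mu> * (norm (sol u0, opapp G (sol u0)))\<^sup>2 \<le> Re (aform u0 u0)"
      using mu(2) aform_sol[OF BDG_dom[OF u0]] by simp
    moreover have "\<mu> * (norm (u0, opapp G u0))\<^sup>2 \<le> \<mu> * (norm (sol u0, opapp G (sol u0)))\<^sup>2"
      using sol_norm_ge[OF u0] mu(1) by simp
    ultimately show ?thesis by linarith
  qed
  thus ?thesis using mu(1) by blast
qed

lemma aform_bd:
  "\<exists>M\<ge>0. \<forall>u0\<in>BDG G D. \<forall>v0\<in>BDG G D. cmod (aform v0 u0) \<le> M * norm (v0, opapp G v0) * norm (u0, opapp G u0)"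
proof -
  obtain M where M: "M \<ge> 0" "\<forall>p q::'h0 \<times> 'h1. cmod (cinner (fst p) (m (fst q)) + cinner (snd p) (a (snd q))) \<le> M * norm p * norm q"
    using pair_bounded by blast
  obtain \<mu> where mu: "\<mu> > 0" "\<forall>u0\<in>BDG G D. \<mu> * (norm (sol u0, opapp G (sol u0)))\<^sup>2 \<le> Re (aform u0 u0)"
    using aform_coer by blast
  have b1: "cmod (aform v0 u0) \<le> M * norm (v0, opapp G v0) * norm (sol u0, opapp G (sol u0))" for v0 u0
    using M(2)[rule_format, of "(v0, opapp G v0)" "(sol u0, opapp G (sol u0))"] by (simp add: aform_def)
  have b2: "\<mu> * norm (sol u0, opapp G (sol u0)) \<le> M * norm (u0, opapp G u0)" if u0: "u0 \<in> BDG G D" for u0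
  proof -
    let ?n = "norm (sol u0, opapp G (sol u0))"
    have "\<mu> * ?n\<^sup>2 \<le> Re (aform u0 u0)" using mu u0 by blast
    also have "\<dots> \<le> cmod (aform u0 u0)" by (rule complex_Re_le_cmod)
    also have "\<dots> \<le> M * norm (u0, opapp G u0) * ?n" by (rule b1)
    finally have "?n * (\<mu> * ?n) \<le> ?n * (M * norm (u0, opapp G u0))" by (simp add: power2_eq_square algebra_simps)
    thus ?thesis by (cases "?n = 0") (use M(1) in \<open>auto simp: mult_le_cancel_left_pos\<close>)
  qed
  have "cmod (aform v0 u0) \<le> (M * M / \<mu>) * norm (v0, opapp G v0) * norm (u0, opapp G u0)"
    if "u0 \<in> BDG G D" "v0 \<in> BDG G D" for u0 v0
  proof -
    have "norm (sol u0, opapp G (sol u0)) \<le> (M / \<mu>) * norm (u0, opapp G u0)"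
      using b2[OF that(1)] mu(1) by (simp add: field_simps)
    hence "M * norm (v0, opapp G v0) * norm (sol u0, opapp G (sol u0))
        \<le> M * norm (v0, opapp G v0) * ((M / \<mu>) * norm (u0, opapp G u0))"
      using M(1) by (intro mult_left_mono) auto
    thus ?thesis using b1[of v0 u0] by (simp add: algebra_simps)
  qed
  moreover have "M * M / \<mu> \<ge> 0" using M(1) mu(1) by simp
  ultimately show ?thesis by blast
qed

lemma aform_add_right:
  "u0 \<in> opdom G \<Longrightarrow> u1 \<in> opdom G \<Longrightarrow> aform v0 (u0 + u1) = aform v0 u0 + aform v0 u1"
  by (simp add: aform_def sol_add opapp_add[OF G_lin sol_dom sol_dom] bcl_add[OF m_bd] bcl_add[OF a_bd]
      cinner_add_right)

lemma aform_scale_right: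
  "u0 \<in> opdom G \<Longrightarrow> aform v0 (c *\<^sub>C u0) = c * aform v0 u0"
  by (simp add: aform_def sol_scale opapp_scale[OF G_lin sol_dom] bcl_scale[OF m_bd] bcl_scale[OF a_bd]
      cinner_scaleC_right algebra_simps)

lemma aform_zero_right: "aform v0 0 = 0"
  by (simp add: aform_def sol_zero opapp_zero[OF G_lin] bcl_zero[OF m_bd] bcl_zero[OF a_bd])

lemma aform_add_left:
  "v0 \<in> opdom G \<Longrightarrow> v1 \<in> opdom G \<Longrightarrow> aform (v0 + v1) u0 = aform v0 u0 + aform v1 u0"
  by (simp add: aform_def opapp_add[OF G_lin] cinner_add_left)

lemma aform_scale_left:
  "v0 \<in> opdom G \<Longrightarrow> aform (c *\<^sub>C v0) u0 = cnj c * aform v0 u0"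
  by (simp add: aform_def opapp_scale[OF G_lin] cinner_scaleC_left algebra_simps)

lemma aform_herm:
  assumes sa: "bounded_selfadjoint a" "bounded_selfadjoint m"
    and u0: "u0 \<in> opdom G" and v0: "v0 \<in> opdom G"
  shows "aform v0 u0 = cnj (aform u0 v0)"
proof -
  let ?u = "sol u0" and ?v = "sol v0"
  have "aform v0 u0 = cinner ?v (m ?u) + cinner (opapp G ?v) (a (opapp G ?u))"
    using A1[OF v0 u0 sol_dom[OF v0] sol_diff_dom[OF v0]] .
  moreover have "aform u0 v0 = cinner ?u (m ?v) + cinner (opapp G ?u) (a (opapp G ?v))"
    using A1[OF u0 v0 sol_dom[OF u0] sol_diff_dom[OF u0]] .
  moreover have "cnj (cinner ?u (m ?v)) = cinner ?v (m ?u)"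
    using cinner_commute[of "m ?v" ?u] sa(2) by (simp add: bounded_selfadjoint_def)
  moreover have "cnj (cinner (opapp G ?u) (a (opapp G ?v))) = cinner (opapp G ?v) (a (opapp G ?u))"
    using cinner_commute[of "a (opapp G ?v)" "opapp G ?u"] sa(1) by (simp add: bounded_selfadjoint_def)
  ultimately show ?thesis by simp
qed

end


locale dtn_kappa = dtn_setting G D a m
  for G :: "('h0::chilbert_space \<times> 'h1::chilbert_space) set" and D a m +
  fixes \<kappa> :: "'h0 \<Rightarrow> 'h::chilbert_space"
  assumes k_lin: "clinear_on (BDG G D) \<kappa>"
    and k_bdd: "\<exists>C. \<forall>u \<in> BDG G D. norm (\<kappa> u) \<le> C * gnorm G u"
    and k_inj: "inj_on \<kappa> (BDG G D)"
    and k_dense: "closure (\<kappa> ` BDG G D) = UNIV"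
begin

abbreviation "WG \<equiv> G \<inter> orth (Gring D)"

lemma BDG_cs: "csubspace (BDG G D)"
  unfolding BDG_def by (rule BD_cs[OF G_lin G_cl G0_lin G0_cl G0_sub])

lemma WG_cs: "csubspace WG" by (rule W_cs[OF G_lin G_cl G0_lin G0_cl G0_sub])
lemma WG_cl: "closed WG" by (rule W_cl[OF G_lin G_cl G0_lin G0_cl G0_sub])

lemma WG_fst: "p \<in> WG \<Longrightarrow> fst p \<in> BDG G D \<and> p = (fst p, opapp G (fst p))"
proof -
  assume p: "p \<in> WG"
  have "fst p \<in> BD G (Gring D) \<and> snd p = opapp G (fst p)" by (rule W_fst[OF G_lin G_cl G0_lin G0_cl G0_sub p])
  thus ?thesis unfolding BDG_def by (metis prod.collapse)
qed

lemma BDG_W: "u \<in> BDG G D \<Longrightarrow> (u, opapp G u) \<in> WG"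
  using BD_graph_iff[OF G_lin G_cl G0_lin G0_cl G0_sub, of u] dom_graph[OF G_lin]
  unfolding BDG_def by auto

lemma k_add: "u \<in> BDG G D \<Longrightarrow> v \<in> BDG G D \<Longrightarrow> \<kappa> (u + v) = \<kappa> u + \<kappa> v"
  using k_lin by (simp add: clinear_on_def)
lemma k_scale: "u \<in> BDG G D \<Longrightarrow> \<kappa> (c *\<^sub>C u) = c *\<^sub>C \<kappa> u"
  using k_lin by (simp add: clinear_on_def)
lemma k_zero: "\<kappa> 0 = 0"
  using k_scale[OF csubspace_0[OF BDG_cs], of 0] by simp

lemma k_bound: "\<exists>C\<ge>0. \<forall>u\<in>BDG G D. norm (\<kappa> u) \<le> C * norm (u, opapp G u)"
proof -
  obtain C where C: "\<forall>u \<in> BDG G D. norm (\<kappa> u) \<le> C * gnorm G u" using k_bdd by blast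
  have "norm (\<kappa> u) \<le> \<bar>C\<bar> * norm (u, opapp G u)" if "u \<in> BDG G D" for u
  proof -
    have "norm (\<kappa> u) \<le> C * norm (u, opapp G u)" using C that by (simp add: gnorm_eq)
    also have "\<dots> \<le> \<bar>C\<bar> * norm (u, opapp G u)" by (intro mult_right_mono) auto
    finally show ?thesis .
  qed
  thus ?thesis by (intro exI[of _ "\<bar>C\<bar>"]) auto
qed

lemma gip_diff_right: "z \<in> opdom G \<Longrightarrow> z' \<in> opdom G \<Longrightarrow> gip G v (z - z') = gip G v z - gip G v z'"
  by (simp add: gip_def opapp_diff[OF G_lin] cinner_diff_right)

lemma kadj_unique:
  assumes "z \<in> BDG G D" "z' \<in> BDG G D" "\<forall>v\<in>BDG G D. gip G v z = gip G v z'"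
  shows "z = z'"
proof -
  have d: "z - z' \<in> BDG G D" using csubspace_diff[OF BDG_cs assms(1,2)] .
  have "gip G (z - z') (z - z') = 0"
    using gip_diff_right[OF BDG_dom[OF assms(1)] BDG_dom[OF assms(2)]] assms(3) d by simp
  hence "z - z' = 0" by (rule gip_self[OF G_lin G_cl G0_lin G0_cl G0_sub])
  thus ?thesis by simp
qed

lemma kadj_exists: "\<exists>z\<in>BDG G D. \<forall>v\<in>BDG G D. cinner (\<kappa> v) \<psi> = gip G v z"
proof -
  obtain C where C: "C \<ge> 0" "\<forall>u\<in>BDG G D. norm (\<kappa> u) \<le> C * norm (u, opapp G u)" using k_bound by blast
  have "\<exists>w\<in>WG. \<forall>p\<in>WG. cinner (\<kappa> (fst p)) \<psi> = cinner p w"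
  proof (rule riesz[OF WG_cs WG_cl, where K="C * norm \<psi>"])
    show "\<forall>x\<in>WG. \<forall>y\<in>WG. cinner (\<kappa> (fst (x + y))) \<psi> = cinner (\<kappa> (fst x)) \<psi> + cinner (\<kappa> (fst y)) \<psi>"
      using WG_fst k_add by (simp add: cinner_add_left)
    show "\<forall>c. \<forall>x\<in>WG. cinner (\<kappa> (fst (c *\<^sub>C x))) \<psi> = cnj c * cinner (\<kappa> (fst x)) \<psi>"
      using WG_fst k_scale by (simp add: cinner_scaleC_left)
    show "\<forall>x\<in>WG. cmod (cinner (\<kappa> (fst x)) \<psi>) \<le> C * norm \<psi> * norm x"
    proof
      fix x assume x: "x \<in> WG"
      have "cmod (cinner (\<kappa> (fst x)) \<psi>) \<le> norm (\<kappa> (fst x)) * norm \<psi>" by (rule cinner_Cauchy_Schwarz)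
      also have "\<dots> \<le> C * norm (fst x, opapp G (fst x)) * norm \<psi>"
        using C WG_fst[OF x] by (intro mult_right_mono) auto
      also have "(fst x, opapp G (fst x)) = x" using WG_fst[OF x] by simp
      finally show "cmod (cinner (\<kappa> (fst x)) \<psi>) \<le> C * norm \<psi> * norm x" by (simp add: algebra_simps)
    qed
  qed
  then obtain w where w: "w \<in> WG" "\<forall>p\<in>WG. cinner (\<kappa> (fst p)) \<psi> = cinner p w" by blast
  have z: "fst w \<in> BDG G D" "w = (fst w, opapp G (fst w))"
    using WG_fst[OF w(1)] by (blast, blast)
  have "cinner (\<kappa> v) \<psi> = gip G v (fst w)" if v: "v \<in> BDG G D" for v
  proof -
    have "cinner (\<kappa> (fst (v, opapp G v))) \<psi> = cinner (v, opapp G v) w" using w(2) BDG_W[OF v] by blast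
    also have "\<dots> = cinner (v, opapp G v) (fst w, opapp G (fst w))" using z(2) by metis
    also have "\<dots> = gip G v (fst w)" by (simp add: gip_def)
    finally show ?thesis by simp
  qed
  thus ?thesis using z(1) by blast
qed

abbreviation "kadj \<equiv> kappa_adj G D \<kappa>"

lemma kadj_prop: "kadj \<psi> \<in> BDG G D \<and> (\<forall>v\<in>BDG G D. cinner (\<kappa> v) \<psi> = gip G v (kadj \<psi>))"
proof -
  obtain z where z: "z \<in> BDG G D" "\<forall>v\<in>BDG G D. cinner (\<kappa> v) \<psi> = gip G v z" using kadj_exists by blast
  have "kadj \<psi> = z"
    unfolding kappa_adj_def
  proof (rule the_equality)
    show "z \<in> BDG G D \<and> (\<forall>v\<in>BDG G D. cinner (\<kappa> v) \<psi> = gip G v z)" using z by blast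
    fix w assume w: "w \<in> BDG G D \<and> (\<forall>v\<in>BDG G D. cinner (\<kappa> v) \<psi> = gip G v w)"
    have "\<forall>v\<in>BDG G D. gip G v w = gip G v z" using w z(2) by simp
    thus "w = z" using kadj_unique[of w z] z(1) w by blast
  qed
  thus ?thesis using z by simp
qed

lemma kadj_eq:
  assumes "z \<in> BDG G D" "\<forall>v\<in>BDG G D. cinner (\<kappa> v) \<psi> = gip G v z"
  shows "kadj \<psi> = z"
proof -
  have k: "kadj \<psi> \<in> BDG G D" "\<forall>v\<in>BDG G D. cinner (\<kappa> v) \<psi> = gip G v (kadj \<psi>)"
    using kadj_prop[of \<psi>] by (blast, blast)
  have "\<forall>v\<in>BDG G D. gip G v (kadj \<psi>) = gip G v z" using k(2) assms(2) by simp
  thus ?thesis using kadj_unique[of "kadj \<psi>" z] k(1) assms(1) by blast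
qed

abbreviation "TH \<equiv> dtn_H G D a m \<kappa>"

lemma T_char:
  "(\<phi>, \<psi>) \<in> TH \<longleftrightarrow> (\<exists>u0\<in>BDG G D. \<kappa> u0 = \<phi> \<and> (\<forall>v0\<in>BDG G D. cinner (\<kappa> v0) \<psi> = aform v0 u0))"
proof
  assume "(\<phi>, \<psi>) \<in> TH"
  then obtain u0 where u0: "u0 \<in> BDG G D" "\<kappa> u0 = \<phi>" "Lam u0 = opapp G (kadj \<psi>)"
    unfolding dtn_H_def by blast
  have z: "kadj \<psi> \<in> BDG G D" using kadj_prop[of \<psi>] by blast
  have Dz: "opapp D (opapp G (kadj \<psi>)) = kadj \<psi>" by (rule opapp_eq[OF D_lin U1[OF z]])
  have "cinner (\<kappa> v0) \<psi> = aform v0 u0" if v0: "v0 \<in> BDG G D" for v0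
  proof -
    have "cinner (\<kappa> v0) \<psi> = gip G v0 (kadj \<psi>)" using kadj_prop[of \<psi>] v0 by blast
    also have "\<dots> = cinner v0 (opapp D (Lam u0)) + cinner (opapp G v0) (Lam u0)"
      by (simp add: gip_def u0(3) Dz)
    also have "\<dots> = aform v0 u0" by (rule A2[OF BDG_dom[OF v0] BDG_dom[OF u0(1)]])
    finally show ?thesis .
  qed
  thus "\<exists>u0\<in>BDG G D. \<kappa> u0 = \<phi> \<and> (\<forall>v0\<in>BDG G D. cinner (\<kappa> v0) \<psi> = aform v0 u0)" using u0 by blast
next
  assume "\<exists>u0\<in>BDG G D. \<kappa> u0 = \<phi> \<and> (\<forall>v0\<in>BDG G D. cinner (\<kappa> v0) \<psi> = aform v0 u0)"
  then obtain u0 where u0: "u0 \<in> BDG G D" "\<kappa> u0 = \<phi>" "\<forall>v0\<in>BDG G D. cinner (\<kappa> v0) \<psi> = aform v0 u0" by blast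
  have L: "Lam u0 \<in> BDD G D" using Lam_prop[OF BDG_dom[OF u0(1)]] by blast
  define z where "z = opapp D (Lam u0)"
  have z: "z \<in> BDG G D" "opapp G z = Lam u0" using U4[OF L] by (auto simp: z_def)
  have "\<forall>v\<in>BDG G D. cinner (\<kappa> v) \<psi> = gip G v z"
  proof
    fix v0 assume v0: "v0 \<in> BDG G D"
    have "gip G v0 z = cinner v0 (opapp D (Lam u0)) + cinner (opapp G v0) (Lam u0)"
      unfolding gip_def z(2) by (simp add: z_def)
    also have "\<dots> = aform v0 u0" by (rule A2[OF BDG_dom[OF v0] BDG_dom[OF u0(1)]])
    finally show "cinner (\<kappa> v0) \<psi> = gip G v0 z" using u0(3) v0 by simp
  qed
  hence "kadj \<psi> = z" using kadj_eq[OF z(1)] by blast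
  hence "Lam u0 = opapp G (kadj \<psi>)" using z(2) by simp
  thus "(\<phi>, \<psi>) \<in> TH" unfolding dtn_H_def using u0 by blast
qed

end


context dtn_kappa begin

lemma T_cs: "csubspace TH"
  unfolding csubspace_def
proof (intro conjI ballI allI)
  show "0 \<in> TH"
    unfolding zero_prod_def T_char
    using csubspace_0[OF BDG_cs] k_zero aform_zero_right by auto
  fix p q assume p: "p \<in> TH" and q: "q \<in> TH"
  obtain x y x' y' where pq: "p = (x, y)" "q = (x', y')" by (cases p, cases q)
  obtain u0 where u0: "u0 \<in> BDG G D" "\<kappa> u0 = x" "\<forall>v0\<in>BDG G D. cinner (\<kappa> v0) y = aform v0 u0"
    using p pq T_char by blast
  obtain u1 where u1: "u1 \<in> BDG G D" "\<kappa> u1 = x'" "\<forall>v0\<in>BDG G D. cinner (\<kappa> v0) y' = aform v0 u1"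
    using q pq T_char by blast
  have "u0 + u1 \<in> BDG G D" using csubspace_add[OF BDG_cs u0(1) u1(1)] .
  moreover have "\<kappa> (u0 + u1) = x + x'" using k_add[OF u0(1) u1(1)] u0 u1 by simp
  moreover have "\<forall>v0\<in>BDG G D. cinner (\<kappa> v0) (y + y') = aform v0 (u0 + u1)"
    using u0(3) u1(3) aform_add_right[OF BDG_dom[OF u0(1)] BDG_dom[OF u1(1)]] by (simp add: cinner_add_right)
  ultimately show "p + q \<in> TH" unfolding pq add_Pair T_char by blast
next
  fix c p assume p: "p \<in> TH"
  obtain x y where pq: "p = (x, y)" by (cases p)
  obtain u0 where u0: "u0 \<in> BDG G D" "\<kappa> u0 = x" "\<forall>v0\<in>BDG G D. cinner (\<kappa> v0) y = aform v0 u0"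
    using p pq T_char by blast
  have "c *\<^sub>C u0 \<in> BDG G D" using csubspace_scaleC[OF BDG_cs u0(1)] .
  moreover have "\<kappa> (c *\<^sub>C u0) = c *\<^sub>C x" using k_scale[OF u0(1)] u0 by simp
  moreover have "\<forall>v0\<in>BDG G D. cinner (\<kappa> v0) (c *\<^sub>C y) = aform v0 (c *\<^sub>C u0)"
    using u0(3) aform_scale_right[OF BDG_dom[OF u0(1)]] by (simp add: cinner_scaleC_right)
  ultimately show "c *\<^sub>C p \<in> TH" unfolding pq scaleC_Pair T_char by blast
qed

lemma T_lin: "clinear_op TH"
proof (rule csubspace_clinear[OF T_cs])
  fix y assume "(0, y) \<in> TH"
  then obtain u0 where u0: "u0 \<in> BDG G D" "\<kappa> u0 = 0" "\<forall>v0\<in>BDG G D. cinner (\<kappa> v0) y = aform v0 u0"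
    using T_char by blast
  have "u0 = 0" using k_inj u0(1,2) k_zero csubspace_0[OF BDG_cs] by (metis inj_on_def)
  hence "\<forall>s\<in>\<kappa> ` BDG G D. cinner s y = 0" using u0(3) aform_zero_right by auto
  thus "y = 0" by (rule orth_dense_zero[OF k_dense])
qed

lemma T_form:
  assumes "(x, y) \<in> TH"
  shows "\<exists>u0\<in>BDG G D. \<kappa> u0 = x \<and> cinner x y = aform u0 u0"
proof -
  obtain u0 where u0: "u0 \<in> BDG G D" "\<kappa> u0 = x" "\<forall>v0\<in>BDG G D. cinner (\<kappa> v0) y = aform v0 u0"
    using assms T_char by blast
  thus ?thesis by auto
qed

lemma T_sector: "\<exists>\<theta>. 0 \<le> \<theta> \<and> \<theta> < pi / 2 \<and> numerical_range TH \<subseteq> sector 0 \<theta>"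
proof -
  obtain \<mu> where mu: "\<mu> > 0" "\<forall>u0\<in>BDG G D. \<mu> * (norm (u0, opapp G u0))\<^sup>2 \<le> Re (aform u0 u0)"
    using aform_coer by blast
  obtain M where M: "M \<ge> 0" "\<forall>u0\<in>BDG G D. \<forall>v0\<in>BDG G D. cmod (aform v0 u0) \<le> M * norm (v0, opapp G v0) * norm (u0, opapp G u0)"
    using aform_bd by blast
  define K where "K = M / \<mu>"
  have K: "K \<ge> 0" using M(1) mu(1) by (simp add: K_def)
  have "z \<in> sector 0 (arctan K)" if z: "z \<in> numerical_range TH" for z
  proof -
    obtain x where x: "x \<in> opdom TH" "norm x = 1" "z = cinner x (opapp TH x)"
      using z unfolding numerical_range_def by blast
    obtain u0 where u0: "u0 \<in> BDG G D" "\<kappa> u0 = x" "cinner x (opapp TH x) = aform u0 u0"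
      using T_form[OF dom_graph[OF T_lin x(1)]] by blast
    have "u0 \<noteq> 0" using x(2) u0(2) k_zero by auto
    hence n: "norm (u0, opapp G u0) > 0" by (simp add: zero_prod_def)
    let ?n = "(norm (u0, opapp G u0))\<^sup>2"
    have zeq: "z = aform u0 u0" using x(3) u0(3) by simp
    have re: "\<mu> * ?n \<le> Re z" unfolding zeq using mu(2) u0(1) by blast
    have "0 < \<mu> * ?n" using mu(1) n by simp
    hence rez: "Re z > 0" using re by linarith
    have cm: "cmod (aform u0 u0) \<le> M * norm (u0, opapp G u0) * norm (u0, opapp G u0)"
      using M(2) u0(1) by blast
    have "\<bar>Im z\<bar> \<le> cmod z" by (rule abs_Im_le_cmod)
    also have "\<dots> \<le> M * ?n" using cm unfolding zeq by (simp add: power2_eq_square mult.assoc)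
    also have "\<dots> = K * (\<mu> * ?n)" using mu(1) by (simp add: K_def)
    also have "\<dots> \<le> K * Re z" by (rule mult_left_mono[OF re K])
    finally have im: "\<bar>Im z\<bar> \<le> K * Re z" .
    have i1: "Im z \<le> K * Re z" "- (K * Re z) \<le> Im z" using im by linarith+
    have "Im z / Re z \<le> K" using i1(1) by (simp add: pos_divide_le_eq[OF rez])
    moreover have "- K \<le> Im z / Re z" using i1(2) by (simp add: pos_le_divide_eq[OF rez])
    ultimately have "- K \<le> Im z / Re z" "Im z / Re z \<le> K" by auto
    hence "arctan (- K) \<le> arctan (Im z / Re z)" "arctan (Im z / Re z) \<le> arctan K"
      by (simp_all add: arctan_le_iff)
    hence "\<bar>arctan (Im z / Re z)\<bar> \<le> arctan K" unfolding arctan_minus by linarith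
    hence "\<bar>Arg z\<bar> \<le> arctan K" using arg_conv_arctan[OF rez] by simp
    thus ?thesis by (simp add: sector_def)
  qed
  moreover have "0 \<le> arctan K" using K by simp
  moreover have "arctan K < pi / 2" by (rule arctan_ubound)
  ultimately show ?thesis by blast
qed

end


context dtn_kappa begin

lemma T_surj: "\<exists>x y. (x, y) \<in> TH \<and> y + x = f"
proof -
  obtain \<mu> where mu: "\<mu> > 0" "\<forall>u0\<in>BDG G D. \<mu> * (norm (u0, opapp G u0))\<^sup>2 \<le> Re (aform u0 u0)"
    using aform_coer by blast
  obtain M where M: "M \<ge> 0" "\<forall>u0\<in>BDG G D. \<forall>v0\<in>BDG G D. cmod (aform v0 u0) \<le> M * norm (v0, opapp G v0) * norm (u0, opapp G u0)"
    using aform_bd by blast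
  obtain C where C: "C \<ge> 0" "\<forall>u\<in>BDG G D. norm (\<kappa> u) \<le> C * norm (u, opapp G u)" using k_bound by blast
  define s where "s p q = aform (fst p) (fst q) + cinner (\<kappa> (fst p)) (\<kappa> (fst q))" for p q :: "'h0 \<times> 'h1"
  define F where "F p = cinner (\<kappa> (fst p)) f" for p :: "'h0 \<times> 'h1"
  have Wf: "fst p \<in> BDG G D" "norm (fst p, opapp G (fst p)) = norm p" if "p \<in> WG" for p
    using WG_fst[OF that] by (blast, metis)
  have Wd: "fst p \<in> opdom G" if "p \<in> WG" for p using BDG_dom[OF Wf(1)[OF that]] .
  have kb: "norm (\<kappa> (fst p)) \<le> C * norm p" if "p \<in> WG" for p using C(2) Wf[OF that] by metis
  have "\<exists>w\<in>WG. \<forall>v\<in>WG. s v w = F v"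
  proof (rule lax_milgram[OF WG_cs WG_cl, where M="M + C * C" and \<mu>=\<mu> and K="C * norm f"])
    show "\<forall>v\<in>WG. \<forall>v'\<in>WG. \<forall>u\<in>WG. s (v + v') u = s v u + s v' u"
      using Wf Wd by (simp add: s_def aform_add_left k_add cinner_add_left)
    show "\<forall>c. \<forall>v\<in>WG. \<forall>u\<in>WG. s (c *\<^sub>C v) u = cnj c * s v u"
      using Wf Wd by (simp add: s_def aform_scale_left k_scale cinner_scaleC_left algebra_simps)
    show "\<forall>v\<in>WG. \<forall>u\<in>WG. \<forall>u'\<in>WG. s v (u + u') = s v u + s v u'"
      using Wf Wd by (simp add: s_def aform_add_right k_add cinner_add_right)
    show "\<forall>c. \<forall>v\<in>WG. \<forall>u\<in>WG. s v (c *\<^sub>C u) = c * s v u"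
      using Wf Wd by (simp add: s_def aform_scale_right k_scale cinner_scaleC_right algebra_simps)
    show "\<forall>v\<in>WG. \<forall>u\<in>WG. cmod (s v u) \<le> (M + C * C) * norm v * norm u"
    proof (intro ballI)
      fix v u assume v: "v \<in> WG" and u: "u \<in> WG"
      have "cmod (s v u) \<le> cmod (aform (fst v) (fst u)) + cmod (cinner (\<kappa> (fst v)) (\<kappa> (fst u)))"
        unfolding s_def by (rule norm_triangle_ineq)
      also have "cmod (aform (fst v) (fst u)) \<le> M * norm v * norm u"
        using M(2) Wf[OF v] Wf[OF u] by metis
      also have "cmod (cinner (\<kappa> (fst v)) (\<kappa> (fst u))) \<le> norm (\<kappa> (fst v)) * norm (\<kappa> (fst u))"
        by (rule cinner_Cauchy_Schwarz)
      also have "\<dots> \<le> (C * norm v) * (C * norm u)"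
        using kb[OF v] kb[OF u] C(1) by (intro mult_mono) auto
      finally show "cmod (s v u) \<le> (M + C * C) * norm v * norm u" by (simp add: algebra_simps)
    qed
    show "0 \<le> M + C * C" using M(1) C(1) by simp
    show "0 < \<mu>" by (rule mu(1))
    show "\<forall>u\<in>WG. \<mu> * (norm u)\<^sup>2 \<le> Re (s u u)"
    proof
      fix u assume u: "u \<in> WG"
      have "\<mu> * (norm u)\<^sup>2 \<le> Re (aform (fst u) (fst u))" using mu(2) Wf[OF u] by metis
      moreover have "Re (cinner (\<kappa> (fst u)) (\<kappa> (fst u))) \<ge> 0" by (simp add: cinner_self_Re)
      ultimately show "\<mu> * (norm u)\<^sup>2 \<le> Re (s u u)" by (simp add: s_def)
    qed
    show "\<forall>x\<in>WG. \<forall>y\<in>WG. F (x + y) = F x + F y"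
      using Wf by (simp add: F_def k_add cinner_add_left)
    show "\<forall>c. \<forall>x\<in>WG. F (c *\<^sub>C x) = cnj c * F x"
      using Wf by (simp add: F_def k_scale cinner_scaleC_left)
    show "\<forall>x\<in>WG. cmod (F x) \<le> C * norm f * norm x"
    proof
      fix x assume x: "x \<in> WG"
      have "cmod (F x) \<le> norm (\<kappa> (fst x)) * norm f" unfolding F_def by (rule cinner_Cauchy_Schwarz)
      also have "\<dots> \<le> C * norm x * norm f" using kb[OF x] by (intro mult_right_mono) auto
      finally show "cmod (F x) \<le> C * norm f * norm x" by (simp add: algebra_simps)
    qed
  qed
  then obtain w where w: "w \<in> WG" "\<forall>v\<in>WG. s v w = F v" by blast
  define u0 where "u0 = fst w"
  have u0: "u0 \<in> BDG G D" using Wf[OF w(1)] by (simp add: u0_def)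
  have "\<forall>v0\<in>BDG G D. cinner (\<kappa> v0) (f - \<kappa> u0) = aform v0 u0"
  proof
    fix v0 assume v0: "v0 \<in> BDG G D"
    have "s (v0, opapp G v0) w = F (v0, opapp G v0)" using w(2) BDG_W[OF v0] by blast
    thus "cinner (\<kappa> v0) (f - \<kappa> u0) = aform v0 u0"
      by (simp add: s_def F_def u0_def cinner_diff_right algebra_simps)
  qed
  hence "(\<kappa> u0, f - \<kappa> u0) \<in> TH" using u0 T_char by blast
  thus ?thesis by (intro exI[of _ "\<kappa> u0"] exI[of _ "f - \<kappa> u0"]) simp
qed

lemma T_m_sectorial: "m_sectorial TH"
proof -
  obtain \<theta> where th: "0 \<le> \<theta>" "\<theta> < pi / 2" "numerical_range TH \<subseteq> sector 0 \<theta>" using T_sector by blast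
  have "snd ` shift_op TH (complex_of_real (-1)) = UNIV"
  proof (intro set_eqI iffI)
    fix f :: 'h assume "f \<in> UNIV"
    obtain x y where xy: "(x, y) \<in> TH" "y + x = f" using T_surj[of f] by blast
    hence "(x, y - complex_of_real (-1) *\<^sub>C x) \<in> shift_op TH (complex_of_real (-1))"
      unfolding shift_op_def by blast
    moreover have "y - complex_of_real (-1) *\<^sub>C x = f" using xy(2) by (simp add: scaleC_minus1)
    ultimately show "f \<in> snd ` shift_op TH (complex_of_real (-1))" by force
  qed simp
  thus ?thesis unfolding m_sectorial_def using T_lin th
    by (intro conjI exI[of _ "0::real"] exI[of _ \<theta>] exI[of _ "-1::real"]) auto
qed

lemma T_selfadjoint:
  assumes sa: "bounded_selfadjoint a" "bounded_selfadjoint m"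
  shows "selfadjoint_op TH"
proof -
  have sub1: "TH \<subseteq> adjoint TH"
  proof
    fix p assume p: "p \<in> TH"
    obtain x y where xy: "p = (x, y)" by (cases p)
    have pT: "(x, y) \<in> TH" using p xy by simp
    obtain u0 where u0: "u0 \<in> BDG G D" "\<kappa> u0 = x" "\<forall>v0\<in>BDG G D. cinner (\<kappa> v0) y = aform v0 u0"
      using T_char[THEN iffD1, OF pT] by blast
    have "cinner w x = cinner x' y" if xw: "(x', w) \<in> TH" for x' w
    proof -
      obtain u1 where u1: "u1 \<in> BDG G D" "\<kappa> u1 = x'" "\<forall>v0\<in>BDG G D. cinner (\<kappa> v0) w = aform v0 u1"
        using T_char[THEN iffD1, OF xw] by blast
      have e1: "cinner (\<kappa> u0) w = aform u0 u1" using u1(3) u0(1) by blast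
      have e2: "cinner (\<kappa> u1) y = aform u1 u0" using u0(3) u1(1) by blast
      have e3: "cnj (aform u0 u1) = aform u1 u0"
        using aform_herm[OF sa BDG_dom[OF u1(1)] BDG_dom[OF u0(1)]] by simp
      have "cinner w x = cnj (cinner x w)" by (rule cinner_commute)
      also have "\<dots> = cnj (aform u0 u1)" using e1 u0(2) by simp
      also have "\<dots> = cinner x' y" using e3 e2 u1(2) by simp
      finally show ?thesis .
    qed
    thus "p \<in> adjoint TH" unfolding xy adjoint_iff by blast
  qed
  have sub2: "adjoint TH \<subseteq> TH"
  proof
    fix p assume p: "p \<in> adjoint TH"
    obtain y z where yz: "p = (y, z)" by (cases p)
    obtain x'' t where xt: "(x'', t) \<in> TH" "t + x'' = y + z" using T_surj[of "y + z"] by blast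
    have h: "cinner w y = cinner x z" if "(x, w) \<in> TH" for x w using p yz that adjoint_iff by blast
    have h2: "cinner w x'' = cinner x t" if "(x, w) \<in> TH" for x w
      using sub1 xt(1) that adjoint_iff by blast
    have "cinner f (y - x'') = 0" for f
    proof -
      obtain x w where xw: "(x, w) \<in> TH" "w + x = f" using T_surj[of f] by blast
      have "z - t = x'' - y" using xt(2) by (simp add: algebra_simps)
      have "cinner w (y - x'') = cinner x (z - t)"
        using h[OF xw(1)] h2[OF xw(1)] by (simp add: cinner_diff_right)
      also have "\<dots> = - cinner x (y - x'')" using \<open>z - t = x'' - y\<close> by (simp add: cinner_diff_right)
      finally have "cinner (w + x) (y - x'') = 0" by (simp add: cinner_add_left)
      thus ?thesis using xw(2) by simp
    qed
    hence "cinner (y - x'') (y - x'') = 0" by blast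
    hence "y = x''" by (simp add: cinner_self_eq_0)
    moreover hence "z = t" using xt(2) by simp
    ultimately show "p \<in> TH" using yz xt(1) by simp
  qed
  have eq: "adjoint TH = TH" using sub1 sub2 by blast
  have "closure (opdom TH) = UNIV"
  proof (rule dense_if_orth_zero[OF csubspace_dom[OF T_lin]])
    fix h assume h: "\<forall>s\<in>opdom TH. cinner s h = 0"
    have "(0, h) \<in> adjoint TH"
      unfolding adjoint_iff using h in_dom[OF T_lin] by auto
    hence "(0, h) \<in> TH" using eq by simp
    thus "h = 0" by (rule op_single[OF T_lin])
  qed
  thus ?thesis using eq by (simp add: selfadjoint_op_def densely_defined_def)
qed

end


theorem theorem3p4:
  fixes G :: "('h0::chilbert_space \<times> 'h1::chilbert_space) set"
    and D :: "('h1 \<times> 'h0) set"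
    and \<kappa> :: "'h0 \<Rightarrow> 'h::chilbert_space"
    and a :: "'h1 \<Rightarrow> 'h1"
    and m :: "'h0 \<Rightarrow> 'h0"
  assumes G: "dd_closed_op G"
    and D: "dd_closed_op D"
    and GD: "neg_op (adjoint G) \<subseteq> D"
    and kappa_lin: "clinear_on (BDG G D) \<kappa>"
    and kappa_bdd: "\<exists>C. \<forall>u \<in> BDG G D. norm (\<kappa> u) \<le> C * gnorm G u"
    and kappa_inj: "inj_on \<kappa> (BDG G D)"
    and kappa_dense: "closure (\<kappa> ` BDG G D) = UNIV"
    and a: "bounded_clinear_op a" "coercive a"
    and m: "bounded_clinear_op m" "coercive m"
  shows "m_sectorial (dtn_H G D a m \<kappa>)
    \<and> (bounded_selfadjoint a \<and> bounded_selfadjoint m \<longrightarrow> selfadjoint_op (dtn_H G D a m \<kappa>))"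
  proof -
  interpret dtn_kappa G D a m \<kappa>
    by unfold_locales (rule G D GD kappa_lin kappa_bdd kappa_inj kappa_dense a m)+
  show ?thesis using T_m_sectorial T_selfadjoint by blast
qed

end
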